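(* Let $R$ be a ring and $M$ a left $R$-module. The following are equivalent: (a) $M$ is critically compressible; (b) $M$ is compressible and monoform; (c) $M$ is fully retractable and $\mathrm{End}_R(M)$ is a left Ore domain; (d) $M$ is retractable, $\mathrm{End}_R(M)$ is a left Ore domain and $\mathrm{End}_R(\widehat{M})$ is isomorphic to the division ring of fractions of $\mathrm{End}_R(M)$.
   Context: A nonzero module $M$ is compressible if it embeds into each of its nonzero submodules; critically compressible if it is compressible and does not embed into any factor module $M/N$ with $N\neq0$; monoform if every nonzero homomorphism $f:N\to M$ from a submodule $N\subseteq M$ is injective. $M$ is retractable if $\mathrm{Hom}_R(M,N)\neq0$ for every nonzero submodule $N$; fully retractable if for every nonzero submodule $N\subseteq M$ and every nonzero homomorphism $g:N\to M$ one has $\mathrm{Hom}_R(M,N)g\neq0$. A left Ore domain is a domain $S$ with $Sa\cap Sb\neq0$ for nonzero $a,b$. $\widehat{M}=\sum\{\mathrm{Im}f: f\in\mathrm{Hom}_R(M,E(M))\}$ is the self-injective hull, $E(M)$ the injective hull. *)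

theory Defs
  imports "HOL-Algebra.Module" "HOL-Algebra.QuotRing"
begin

text \<open>HOL-Algebra's locale module requires a commutative ring, so we use the same
  axioms over an arbitrary unital ring R.\<close>

locale left_module = R?: ring R + M?: abelian_group M
  for R :: "('r, 'c) ring_scheme" (structure) and M :: "('r, 'a, 'd) module_scheme" (structure) +
  assumes smult_closed:
      "\<lbrakk>a \<in> carrier R; x \<in> carrier M\<rbrakk> \<Longrightarrow> a \<odot>\<^bsub>M\<^esub> x \<in> carrier M"
    and smult_l_distr:
      "\<lbrakk>a \<in> carrier R; b \<in> carrier R; x \<in> carrier M\<rbrakk> \<Longrightarrow>
      (a \<oplus> b) \<odot>\<^bsub>M\<^esub> x = a \<odot>\<^bsub>M\<^esub> x \<oplus>\<^bsub>M\<^esub> b \<odot>\<^bsub>M\<^esub> x"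
    and smult_r_distr:
      "\<lbrakk>a \<in> carrier R; x \<in> carrier M; y \<in> carrier M\<rbrakk> \<Longrightarrow>
      a \<odot>\<^bsub>M\<^esub> (x \<oplus>\<^bsub>M\<^esub> y) = a \<odot>\<^bsub>M\<^esub> x \<oplus>\<^bsub>M\<^esub> a \<odot>\<^bsub>M\<^esub> y"
    and smult_assoc1:
      "\<lbrakk>a \<in> carrier R; b \<in> carrier R; x \<in> carrier M\<rbrakk> \<Longrightarrow>
      (a \<otimes> b) \<odot>\<^bsub>M\<^esub> x = a \<odot>\<^bsub>M\<^esub> (b \<odot>\<^bsub>M\<^esub> x)"
    and smult_one:
      "x \<in> carrier M \<Longrightarrow> \<one> \<odot>\<^bsub>M\<^esub> x = x"

text \<open>R-linear maps from the subset A of M to the subset B of N (A, B submodules).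
  Maps are only relevant on A.\<close>

definition lin_map ::
  "('r, 'c) ring_scheme \<Rightarrow> ('r, 'a, 'd) module_scheme \<Rightarrow> 'a set \<Rightarrow>
   ('r, 'b, 'e) module_scheme \<Rightarrow> 'b set \<Rightarrow> ('a \<Rightarrow> 'b) set" where
  "lin_map R M A N B =
    {f. f \<in> A \<rightarrow> B \<and>
        (\<forall>x\<in>A. \<forall>y\<in>A. f (x \<oplus>\<^bsub>M\<^esub> y) = f x \<oplus>\<^bsub>N\<^esub> f y) \<and>
        (\<forall>a\<in>carrier R. \<forall>x\<in>A. f (a \<odot>\<^bsub>M\<^esub> x) = a \<odot>\<^bsub>N\<^esub> f x)}"

definition embeds ::
  "('r, 'c) ring_scheme \<Rightarrow> ('r, 'a, 'd) module_scheme \<Rightarrow> 'a set \<Rightarrow>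
   ('r, 'b, 'e) module_scheme \<Rightarrow> 'b set \<Rightarrow> bool" where
  "embeds R M A N B \<longleftrightarrow> (\<exists>f \<in> lin_map R M A N B. inj_on f A)"

definition quotient_module ::
  "('r, 'a, 'd) module_scheme \<Rightarrow> 'a set \<Rightarrow> ('r, 'a set) module" where
  "quotient_module M N =
    \<lparr>carrier = a_rcosets\<^bsub>M\<^esub> N,
     mult = (\<lambda>_ _. undefined), one = undefined,
     zero = N,
     add = set_add M,
     smult = (\<lambda>a C. set_add M N ((\<lambda>x. a \<odot>\<^bsub>M\<^esub> x) ` C))\<rparr>"

definition nonzero_module :: "('r, 'a, 'd) module_scheme \<Rightarrow> bool" where
  "nonzero_module M \<longleftrightarrow> carrier M \<noteq> {\<zero>\<^bsub>M\<^esub>}"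

definition nonzero_submodule ::
  "('r, 'c) ring_scheme \<Rightarrow> ('r, 'a, 'd) module_scheme \<Rightarrow> 'a set \<Rightarrow> bool" where
  "nonzero_submodule R M N \<longleftrightarrow> submodule N R M \<and> N \<noteq> {\<zero>\<^bsub>M\<^esub>}"

definition compressible :: "('r, 'c) ring_scheme \<Rightarrow> ('r, 'a, 'd) module_scheme \<Rightarrow> bool" where
  "compressible R M \<longleftrightarrow> nonzero_module M \<and>
     (\<forall>N. nonzero_submodule R M N \<longrightarrow> embeds R M (carrier M) M N)"

definition critically_compressible ::
  "('r, 'c) ring_scheme \<Rightarrow> ('r, 'a, 'd) module_scheme \<Rightarrow> bool" where
  "critically_compressible R M \<longleftrightarrow> compressible R M \<and>
     (\<forall>N. nonzero_submodule R M N \<longrightarrow>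
        \<not> embeds R M (carrier M) (quotient_module M N) (carrier (quotient_module M N)))"

definition monoform :: "('r, 'c) ring_scheme \<Rightarrow> ('r, 'a, 'd) module_scheme \<Rightarrow> bool" where
  "monoform R M \<longleftrightarrow> nonzero_module M \<and>
     (\<forall>N f. submodule N R M \<longrightarrow> f \<in> lin_map R M N M (carrier M) \<longrightarrow>
        (\<exists>x\<in>N. f x \<noteq> \<zero>\<^bsub>M\<^esub>) \<longrightarrow> inj_on f N)"

definition retractable :: "('r, 'c) ring_scheme \<Rightarrow> ('r, 'a, 'd) module_scheme \<Rightarrow> bool" where
  "retractable R M \<longleftrightarrow>
     (\<forall>N. nonzero_submodule R M N \<longrightarrow>
        (\<exists>f \<in> lin_map R M (carrier M) M N. \<exists>x\<in>carrier M. f x \<noteq> \<zero>\<^bsub>M\<^esub>))"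

text \<open>Maps are written on the right in the paper, so Hom(M,N)g is the set of
  composites "first h then g", i.e. g \<circ> h : M \<rightarrow> M.\<close>
definition fully_retractable ::
  "('r, 'c) ring_scheme \<Rightarrow> ('r, 'a, 'd) module_scheme \<Rightarrow> bool" where
  "fully_retractable R M \<longleftrightarrow>
     (\<forall>N g. nonzero_submodule R M N \<longrightarrow> g \<in> lin_map R M N M (carrier M) \<longrightarrow>
        (\<exists>y\<in>N. g y \<noteq> \<zero>\<^bsub>M\<^esub>) \<longrightarrow>
        (\<exists>h \<in> lin_map R M (carrier M) M N. \<exists>x\<in>carrier M. g (h x) \<noteq> \<zero>\<^bsub>M\<^esub>))"

text \<open>End_R(M), with maps written on the right (as in the paper): the product f g
  means "first f, then g", i.e. the function composite g \<circ> f.\<close>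
definition End_ring :: "('r, 'c) ring_scheme \<Rightarrow> ('r, 'a, 'd) module_scheme \<Rightarrow> ('a \<Rightarrow> 'a) ring" where
  "End_ring R M =
    \<lparr>carrier = {f. f \<in> lin_map R M (carrier M) M (carrier M) \<and> f \<in> extensional (carrier M)},
     mult = (\<lambda>f g. compose (carrier M) g f),
     one = (\<lambda>x\<in>carrier M. x),
     zero = (\<lambda>x\<in>carrier M. \<zero>\<^bsub>M\<^esub>),
     add = (\<lambda>f g. \<lambda>x\<in>carrier M. f x \<oplus>\<^bsub>M\<^esub> g x)\<rparr>"

definition nc_domain :: "('a, 'b) ring_scheme \<Rightarrow> bool" where
  "nc_domain S \<longleftrightarrow> ring S \<and> \<one>\<^bsub>S\<^esub> \<noteq> \<zero>\<^bsub>S\<^esub> \<and>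
     (\<forall>a\<in>carrier S. \<forall>b\<in>carrier S. a \<otimes>\<^bsub>S\<^esub> b = \<zero>\<^bsub>S\<^esub> \<longrightarrow> a = \<zero>\<^bsub>S\<^esub> \<or> b = \<zero>\<^bsub>S\<^esub>)"

definition left_ore_domain :: "('a, 'b) ring_scheme \<Rightarrow> bool" where
  "left_ore_domain S \<longleftrightarrow> nc_domain S \<and>
     (\<forall>a\<in>carrier S - {\<zero>\<^bsub>S\<^esub>}. \<forall>b\<in>carrier S - {\<zero>\<^bsub>S\<^esub>}.
        \<exists>s\<in>carrier S. \<exists>t\<in>carrier S. s \<otimes>\<^bsub>S\<^esub> a = t \<otimes>\<^bsub>S\<^esub> b \<and> s \<otimes>\<^bsub>S\<^esub> a \<noteq> \<zero>\<^bsub>S\<^esub>)"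

definition division_ring :: "('a, 'b) ring_scheme \<Rightarrow> bool" where
  "division_ring Q \<longleftrightarrow> ring Q \<and> \<one>\<^bsub>Q\<^esub> \<noteq> \<zero>\<^bsub>Q\<^esub> \<and> carrier Q - {\<zero>\<^bsub>Q\<^esub>} \<subseteq> Units Q"

definition division_ring_of_fractions ::
  "('a, 'b) ring_scheme \<Rightarrow> ('q, 'c) ring_scheme \<Rightarrow> ('a \<Rightarrow> 'q) \<Rightarrow> bool" where
  "division_ring_of_fractions S Q \<phi> \<longleftrightarrow>
     division_ring Q \<and> \<phi> \<in> ring_hom S Q \<and> inj_on \<phi> (carrier S) \<and>
     (\<forall>s\<in>carrier S - {\<zero>\<^bsub>S\<^esub>}. \<phi> s \<in> Units Q) \<and>
     (\<forall>q\<in>carrier Q. \<exists>s\<in>carrier S - {\<zero>\<^bsub>S\<^esub>}. \<exists>t\<in>carrier S.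
        q = inv\<^bsub>Q\<^esub> (\<phi> s) \<otimes>\<^bsub>Q\<^esub> \<phi> t)"

definition regular_module :: "('r, 'c) ring_scheme \<Rightarrow> ('r, 'r) module" where
  "regular_module R =
    \<lparr>carrier = carrier R, mult = mult R, one = one R, zero = zero R, add = add R,
     smult = mult R\<rparr>"

text \<open>Injectivity, stated via Baer's criterion.\<close>
definition injective_module ::
  "('r, 'c) ring_scheme \<Rightarrow> ('r, 'e, 'd) module_scheme \<Rightarrow> bool" where
  "injective_module R E \<longleftrightarrow>
     (\<forall>I f. submodule I R (regular_module R) \<longrightarrow> f \<in> lin_map R (regular_module R) I E (carrier E) \<longrightarrow>
        (\<exists>e\<in>carrier E. \<forall>a\<in>I. f a = a \<odot>\<^bsub>E\<^esub> e))"

definition injective_hull ::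
  "('r, 'c) ring_scheme \<Rightarrow> ('r, 'a, 'd) module_scheme \<Rightarrow> ('r, 'e, 'f) module_scheme \<Rightarrow> ('a \<Rightarrow> 'e) \<Rightarrow> bool" where
  "injective_hull R M E \<iota> \<longleftrightarrow>
     left_module R E \<and> injective_module R E \<and>
     \<iota> \<in> lin_map R M (carrier M) E (carrier E) \<and> inj_on \<iota> (carrier M) \<and>
     (\<forall>N. nonzero_submodule R E N \<longrightarrow> N \<inter> \<iota> ` carrier M \<noteq> {\<zero>\<^bsub>E\<^esub>})"

definition generated_submodule ::
  "('r, 'c) ring_scheme \<Rightarrow> ('r, 'e, 'd) module_scheme \<Rightarrow> 'e set \<Rightarrow> 'e set" where
  "generated_submodule R E S = \<Inter>{N. submodule N R E \<and> S \<subseteq> N}"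

text \<open>The self-injective hull M^ = \<Sum>{Im f : f \<in> Hom_R(M, E(M))}, as a submodule of E(M).\<close>
definition self_injective_hull ::
  "('r, 'c) ring_scheme \<Rightarrow> ('r, 'a, 'd) module_scheme \<Rightarrow> ('r, 'e, 'f) module_scheme \<Rightarrow> 'e set" where
  "self_injective_hull R M E =
     generated_submodule R E (\<Union>{f ` carrier M | f. f \<in> lin_map R M (carrier M) E (carrier E)})"

end

theory Submission
  imports Defs
begin


context left_module begin

lemma smult_zero: "a \<in> carrier R \<Longrightarrow> a \<odot>\<^bsub>M\<^esub> \<zero>\<^bsub>M\<^esub> = \<zero>\<^bsub>M\<^esub>"
proof -
  assume a: "a \<in> carrier R"
  have "a \<odot>\<^bsub>M\<^esub> \<zero>\<^bsub>M\<^esub> \<oplus>\<^bsub>M\<^esub> a \<odot>\<^bsub>M\<^esub> \<zero>\<^bsub>M\<^esub> = a \<odot>\<^bsub>M\<^esub> \<zero>\<^bsub>M\<^esub> \<oplus>\<^bsub>M\<^esub> \<zero>\<^bsub>M\<^esub>"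
    using smult_r_distr[OF a, of "\<zero>\<^bsub>M\<^esub>" "\<zero>\<^bsub>M\<^esub>"] a smult_closed by simp
  then show ?thesis using a smult_closed by simp
qed

lemma zero_smult: "x \<in> carrier M \<Longrightarrow> \<zero>\<^bsub>R\<^esub> \<odot>\<^bsub>M\<^esub> x = \<zero>\<^bsub>M\<^esub>"
proof -
  assume x: "x \<in> carrier M"
  have "\<zero>\<^bsub>R\<^esub> \<odot>\<^bsub>M\<^esub> x \<oplus>\<^bsub>M\<^esub> \<zero>\<^bsub>R\<^esub> \<odot>\<^bsub>M\<^esub> x = \<zero>\<^bsub>R\<^esub> \<odot>\<^bsub>M\<^esub> x \<oplus>\<^bsub>M\<^esub> \<zero>\<^bsub>M\<^esub>"
    using smult_l_distr[of "\<zero>\<^bsub>R\<^esub>" "\<zero>\<^bsub>R\<^esub>" x] x smult_closed by simp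
  then show ?thesis using x smult_closed by simp
qed

lemma smult_minus: "a \<in> carrier R \<Longrightarrow> x \<in> carrier M \<Longrightarrow> (\<ominus>\<^bsub>R\<^esub> a) \<odot>\<^bsub>M\<^esub> x = \<ominus>\<^bsub>M\<^esub> (a \<odot>\<^bsub>M\<^esub> x)"
proof -
  assume a: "a \<in> carrier R" and x: "x \<in> carrier M"
  have "(\<ominus>\<^bsub>R\<^esub> a) \<odot>\<^bsub>M\<^esub> x \<oplus>\<^bsub>M\<^esub> a \<odot>\<^bsub>M\<^esub> x = \<zero>\<^bsub>M\<^esub>"
    using smult_l_distr[of "\<ominus>\<^bsub>R\<^esub> a" a x] a x zero_smult by (simp add: R.l_neg)
  then show ?thesis using a x smult_closed by (simp add: M.minus_equality)
qed

lemma smult_minus2: "a \<in> carrier R \<Longrightarrow> x \<in> carrier M \<Longrightarrow> a \<odot>\<^bsub>M\<^esub> (\<ominus>\<^bsub>M\<^esub> x) = \<ominus>\<^bsub>M\<^esub> (a \<odot>\<^bsub>M\<^esub> x)"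
proof -
  assume a: "a \<in> carrier R" and x: "x \<in> carrier M"
  have "a \<odot>\<^bsub>M\<^esub> (\<ominus>\<^bsub>M\<^esub> x) \<oplus>\<^bsub>M\<^esub> a \<odot>\<^bsub>M\<^esub> x = \<zero>\<^bsub>M\<^esub>"
    using smult_r_distr[of a "\<ominus>\<^bsub>M\<^esub> x" x] a x smult_zero by (simp add: M.l_neg)
  then show ?thesis using a x smult_closed by (simp add: M.minus_equality)
qed

lemma submoduleI':
  assumes "N \<subseteq> carrier M" "\<zero>\<^bsub>M\<^esub> \<in> N"
    "\<And>x y. x \<in> N \<Longrightarrow> y \<in> N \<Longrightarrow> x \<oplus>\<^bsub>M\<^esub> y \<in> N"
    "\<And>x. x \<in> N \<Longrightarrow> \<ominus>\<^bsub>M\<^esub> x \<in> N"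
    "\<And>a x. a \<in> carrier R \<Longrightarrow> x \<in> N \<Longrightarrow> a \<odot>\<^bsub>M\<^esub> x \<in> N"
  shows "submodule N R M"
  apply (intro submodule.intro subgroup.intro submodule_axioms.intro)
  using assms by (auto simp: a_inv_def)

lemma submoduleE:
  assumes "submodule N R M"
  shows "N \<subseteq> carrier M" "\<zero>\<^bsub>M\<^esub> \<in> N"
    "\<And>x y. x \<in> N \<Longrightarrow> y \<in> N \<Longrightarrow> x \<oplus>\<^bsub>M\<^esub> y \<in> N"
    "\<And>x. x \<in> N \<Longrightarrow> \<ominus>\<^bsub>M\<^esub> x \<in> N"
    "\<And>a x. a \<in> carrier R \<Longrightarrow> x \<in> N \<Longrightarrow> a \<odot>\<^bsub>M\<^esub> x \<in> N"
  using assms unfolding submodule_def submodule_axioms_def subgroup_def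
  by (auto simp: a_inv_def)

lemma submodule_carrier: "submodule (carrier M) R M"
  by (rule submoduleI') (auto intro: smult_closed)

lemma submodule_zero: "submodule {\<zero>\<^bsub>M\<^esub>} R M"
  by (rule submoduleI') (auto simp: smult_zero)

end

lemma lin_mapI:
  assumes "\<And>x. x \<in> A \<Longrightarrow> f x \<in> B"
    "\<And>x y. x \<in> A \<Longrightarrow> y \<in> A \<Longrightarrow> f (x \<oplus>\<^bsub>M\<^esub> y) = f x \<oplus>\<^bsub>N\<^esub> f y"
    "\<And>a x. a \<in> carrier R \<Longrightarrow> x \<in> A \<Longrightarrow> f (a \<odot>\<^bsub>M\<^esub> x) = a \<odot>\<^bsub>N\<^esub> f x"
  shows "f \<in> lin_map R M A N B"
  using assms unfolding lin_map_def by auto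

lemma lin_mapD:
  assumes "f \<in> lin_map R M A N B"
  shows "\<And>x. x \<in> A \<Longrightarrow> f x \<in> B"
    "\<And>x y. x \<in> A \<Longrightarrow> y \<in> A \<Longrightarrow> f (x \<oplus>\<^bsub>M\<^esub> y) = f x \<oplus>\<^bsub>N\<^esub> f y"
    "\<And>a x. a \<in> carrier R \<Longrightarrow> x \<in> A \<Longrightarrow> f (a \<odot>\<^bsub>M\<^esub> x) = a \<odot>\<^bsub>N\<^esub> f x"
  using assms unfolding lin_map_def by auto

lemma lin_map_comp:
  assumes "f \<in> lin_map R M A N B" "g \<in> lin_map R N B P C"
  shows "(\<lambda>x. g (f x)) \<in> lin_map R M A P C"
  using lin_mapD[OF assms(1)] lin_mapD[OF assms(2)] by (intro lin_mapI) auto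

lemma lin_map_mono:
  assumes "f \<in> lin_map R M A N B" "A' \<subseteq> A" "\<And>x. x \<in> A' \<Longrightarrow> f x \<in> B'"
  shows "f \<in> lin_map R M A' N B'"
  using lin_mapD[OF assms(1)] assms(2,3) by (intro lin_mapI) (auto simp: subset_iff)

lemma lin_map_cong:
  assumes "f \<in> lin_map R M A N B" "\<And>x. x \<in> A \<Longrightarrow> g x = f x"
    "\<And>x y. x \<in> A \<Longrightarrow> y \<in> A \<Longrightarrow> x \<oplus>\<^bsub>M\<^esub> y \<in> A"
    "\<And>a x. a \<in> carrier R \<Longrightarrow> x \<in> A \<Longrightarrow> a \<odot>\<^bsub>M\<^esub> x \<in> A"
  shows "g \<in> lin_map R M A N B"
  using lin_mapD[OF assms(1)] assms(2-4) by (intro lin_mapI) auto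

lemma lin_map_zero:
  assumes "left_module R M" "left_module R N" "submodule A R M"
    "f \<in> lin_map R M A N B" "B \<subseteq> carrier N"
  shows "f \<zero>\<^bsub>M\<^esub> = \<zero>\<^bsub>N\<^esub>"
proof -
  interpret M: left_module R M by fact
  interpret N: left_module R N by fact
  have z: "\<zero>\<^bsub>M\<^esub> \<in> A" using M.submoduleE(2)[OF assms(3)] .
  have "f \<zero>\<^bsub>M\<^esub> = f (\<zero>\<^bsub>R\<^esub> \<odot>\<^bsub>M\<^esub> \<zero>\<^bsub>M\<^esub>)" by (simp add: M.zero_smult)
  also have "\<dots> = \<zero>\<^bsub>R\<^esub> \<odot>\<^bsub>N\<^esub> f \<zero>\<^bsub>M\<^esub>" using lin_mapD(3)[OF assms(4) _ z] by simp
  also have "\<dots> = \<zero>\<^bsub>N\<^esub>" using N.zero_smult lin_mapD(1)[OF assms(4) z] assms(5) by auto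
  finally show ?thesis .
qed

lemma lin_map_minus:
  assumes "left_module R M" "left_module R N" "submodule A R M"
    "f \<in> lin_map R M A N B" "B \<subseteq> carrier N" "x \<in> A"
  shows "f (\<ominus>\<^bsub>M\<^esub> x) = \<ominus>\<^bsub>N\<^esub> f x"
proof -
  interpret M: left_module R M by fact
  interpret N: left_module R N by fact
  have xM: "x \<in> carrier M" using M.submoduleE(1)[OF assms(3)] assms(6) by auto
  have fx: "f x \<in> carrier N" using lin_mapD(1)[OF assms(4) assms(6)] assms(5) by auto
  have "f (\<ominus>\<^bsub>M\<^esub> x) = f ((\<ominus>\<^bsub>R\<^esub> \<one>\<^bsub>R\<^esub>) \<odot>\<^bsub>M\<^esub> x)" using M.smult_minus[of "\<one>\<^bsub>R\<^esub>" x] xM M.smult_one by simp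
  also have "\<dots> = (\<ominus>\<^bsub>R\<^esub> \<one>\<^bsub>R\<^esub>) \<odot>\<^bsub>N\<^esub> f x" using lin_mapD(3)[OF assms(4) _ assms(6)] by simp
  also have "\<dots> = \<ominus>\<^bsub>N\<^esub> f x" using N.smult_minus[of "\<one>\<^bsub>R\<^esub>" "f x"] fx N.smult_one by simp
  finally show ?thesis .
qed

lemma lin_map_diff:
  assumes "left_module R M" "left_module R N" "submodule A R M"
    "f \<in> lin_map R M A N B" "B \<subseteq> carrier N" "x \<in> A" "y \<in> A"
  shows "f (x \<ominus>\<^bsub>M\<^esub> y) = f x \<ominus>\<^bsub>N\<^esub> f y"
proof -
  interpret M: left_module R M by fact
  have "\<ominus>\<^bsub>M\<^esub> y \<in> A" using M.submoduleE(4)[OF assms(3) assms(7)] .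
  then show ?thesis using lin_mapD(2)[OF assms(4) assms(6)] lin_map_minus[OF assms(1-5) assms(7)]
    by (simp add: a_minus_def)
qed

lemma lin_map_inj_iff:
  assumes "left_module R M" "left_module R N" "submodule A R M"
    "f \<in> lin_map R M A N B" "B \<subseteq> carrier N"
  shows "inj_on f A \<longleftrightarrow> (\<forall>x\<in>A. f x = \<zero>\<^bsub>N\<^esub> \<longrightarrow> x = \<zero>\<^bsub>M\<^esub>)"
proof -
  interpret M: left_module R M by fact
  interpret N: left_module R N by fact
  have A: "A \<subseteq> carrier M" using M.submoduleE(1)[OF assms(3)] .
  have z: "\<zero>\<^bsub>M\<^esub> \<in> A" using M.submoduleE(2)[OF assms(3)] .
  have f0: "f \<zero>\<^bsub>M\<^esub> = \<zero>\<^bsub>N\<^esub>" by (rule lin_map_zero[OF assms])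
  show ?thesis
  proof
    assume "inj_on f A" then show "\<forall>x\<in>A. f x = \<zero>\<^bsub>N\<^esub> \<longrightarrow> x = \<zero>\<^bsub>M\<^esub>"
      using f0 z by (metis inj_onD)
  next
    assume H: "\<forall>x\<in>A. f x = \<zero>\<^bsub>N\<^esub> \<longrightarrow> x = \<zero>\<^bsub>M\<^esub>"
    show "inj_on f A"
    proof (rule inj_onI)
      fix x y assume x: "x \<in> A" and y: "y \<in> A" and e: "f x = f y"
      have d: "x \<ominus>\<^bsub>M\<^esub> y \<in> A" using M.submoduleE(3,4)[OF assms(3)] x y by (simp add: a_minus_def)
      have "f (x \<ominus>\<^bsub>M\<^esub> y) = \<zero>\<^bsub>N\<^esub>" using lin_map_diff[OF assms x y] e
        lin_mapD(1)[OF assms(4) y] assms(5) by (auto simp: N.r_neg a_minus_def)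
      then have "x \<ominus>\<^bsub>M\<^esub> y = \<zero>\<^bsub>M\<^esub>" using H d by auto
      moreover have "x = (x \<ominus>\<^bsub>M\<^esub> y) \<oplus>\<^bsub>M\<^esub> y" using subsetD[OF A x] subsetD[OF A y] by (simp add: M.minus_eq M.a_assoc M.l_neg)
      ultimately show "x = y" using y A by auto
    qed
  qed
qed

lemma kernel_submodule:
  assumes "left_module R M" "left_module R N" "submodule A R M"
    "f \<in> lin_map R M A N B" "B \<subseteq> carrier N"
  shows "submodule {x\<in>A. f x = \<zero>\<^bsub>N\<^esub>} R M"
proof -
  interpret M: left_module R M by fact
  interpret N: left_module R N by fact
  note S = M.submoduleE[OF assms(3)]
  show ?thesis
  proof (rule M.submoduleI')
    show "{x \<in> A. f x = \<zero>\<^bsub>N\<^esub>} \<subseteq> carrier M" using S by auto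
    show "\<zero>\<^bsub>M\<^esub> \<in> {x \<in> A. f x = \<zero>\<^bsub>N\<^esub>}" using S lin_map_zero[OF assms] by auto
    show "x \<oplus>\<^bsub>M\<^esub> y \<in> {x \<in> A. f x = \<zero>\<^bsub>N\<^esub>}" if "x \<in> {x \<in> A. f x = \<zero>\<^bsub>N\<^esub>}" "y \<in> {x \<in> A. f x = \<zero>\<^bsub>N\<^esub>}" for x y
      using that S lin_mapD(2)[OF assms(4)] by auto
    show "\<ominus>\<^bsub>M\<^esub> x \<in> {x \<in> A. f x = \<zero>\<^bsub>N\<^esub>}" if "x \<in> {x \<in> A. f x = \<zero>\<^bsub>N\<^esub>}" for x
      using that S lin_map_minus[OF assms] by auto
    show "a \<odot>\<^bsub>M\<^esub> x \<in> {x \<in> A. f x = \<zero>\<^bsub>N\<^esub>}" if "a \<in> carrier R" "x \<in> {x \<in> A. f x = \<zero>\<^bsub>N\<^esub>}" for a x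
      using that S lin_mapD(3)[OF assms(4)] N.smult_zero by auto
  qed
qed

lemma preimage_submodule:
  assumes "left_module R M" "left_module R N" "submodule A R M"
    "f \<in> lin_map R M A N B" "B \<subseteq> carrier N" "submodule C R N"
  shows "submodule {x\<in>A. f x \<in> C} R M"
proof -
  interpret M: left_module R M by fact
  interpret N: left_module R N by fact
  note S = M.submoduleE[OF assms(3)]
  note T = N.submoduleE[OF assms(6)]
  show ?thesis
  proof (rule M.submoduleI')
    show "{x \<in> A. f x \<in> C} \<subseteq> carrier M" using S by auto
    show "\<zero>\<^bsub>M\<^esub> \<in> {x \<in> A. f x \<in> C}" using S T lin_map_zero[OF assms(1-5)] by auto
    show "x \<oplus>\<^bsub>M\<^esub> y \<in> {x \<in> A. f x \<in> C}" if "x \<in> {x \<in> A. f x \<in> C}" "y \<in> {x \<in> A. f x \<in> C}" for x y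
      using that S T lin_mapD(2)[OF assms(4)] by auto
    show "\<ominus>\<^bsub>M\<^esub> x \<in> {x \<in> A. f x \<in> C}" if "x \<in> {x \<in> A. f x \<in> C}" for x
      using that S T lin_map_minus[OF assms(1-5)] by auto
    show "a \<odot>\<^bsub>M\<^esub> x \<in> {x \<in> A. f x \<in> C}" if "a \<in> carrier R" "x \<in> {x \<in> A. f x \<in> C}" for a x
      using that S T lin_mapD(3)[OF assms(4)] by auto
  qed
qed

lemma image_submodule:
  assumes "left_module R M" "left_module R N" "submodule A R M"
    "f \<in> lin_map R M A N B" "B \<subseteq> carrier N"
  shows "submodule (f ` A) R N"
proof -
  interpret M: left_module R M by fact
  interpret N: left_module R N by fact
  note S = M.submoduleE[OF assms(3)]
  show ?thesis
  proof (rule N.submoduleI')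
    show "f ` A \<subseteq> carrier N" using lin_mapD(1)[OF assms(4)] assms(5) by auto
    show "\<zero>\<^bsub>N\<^esub> \<in> f ` A" using S lin_map_zero[OF assms] by force
    show "x \<oplus>\<^bsub>N\<^esub> y \<in> f ` A" if "x \<in> f ` A" "y \<in> f ` A" for x y
      using that S lin_mapD(2)[OF assms(4)] by (smt (verit, best) image_iff)
    show "\<ominus>\<^bsub>N\<^esub> x \<in> f ` A" if "x \<in> f ` A" for x
      using that S lin_map_minus[OF assms] by (smt (verit, best) image_iff)
    show "a \<odot>\<^bsub>N\<^esub> x \<in> f ` A" if "a \<in> carrier R" "x \<in> f ` A" for a x
      using that S lin_mapD(3)[OF assms(4)] by (smt (verit, best) image_iff)
  qed
qed


context left_module begin

lemma End_carrier: "f \<in> carrier (End_ring R M) \<longleftrightarrow> f \<in> lin_map R M (carrier M) M (carrier M) \<and> f \<in> extensional (carrier M)"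
  by (simp add: End_ring_def)
lemma End_mult: "f \<otimes>\<^bsub>End_ring R M\<^esub> g = compose (carrier M) g f"
  by (simp add: End_ring_def)
lemma End_add: "f \<oplus>\<^bsub>End_ring R M\<^esub> g = (\<lambda>x\<in>carrier M. f x \<oplus>\<^bsub>M\<^esub> g x)"
  by (simp add: End_ring_def)
lemma End_one: "\<one>\<^bsub>End_ring R M\<^esub> = (\<lambda>x\<in>carrier M. x)"
  by (simp add: End_ring_def)
lemma End_zero: "\<zero>\<^bsub>End_ring R M\<^esub> = (\<lambda>x\<in>carrier M. \<zero>\<^bsub>M\<^esub>)"
  by (simp add: End_ring_def)

lemma End_eqI: "f \<in> carrier (End_ring R M) \<Longrightarrow> g \<in> carrier (End_ring R M) \<Longrightarrow> (\<And>x. x \<in> carrier M \<Longrightarrow> f x = g x) \<Longrightarrow> f = g"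
  unfolding End_carrier by (meson extensionalityI)

lemma End_closed: "f \<in> carrier (End_ring R M) \<Longrightarrow> x \<in> carrier M \<Longrightarrow> f x \<in> carrier M"
  by (auto simp: End_carrier dest: lin_mapD)

lemma End_memI: "f \<in> lin_map R M (carrier M) M (carrier M) \<Longrightarrow> restrict f (carrier M) \<in> carrier (End_ring R M)"
  unfolding End_carrier by (auto intro: lin_map_cong smult_closed)

lemma End_add_closed:
  assumes f: "f \<in> carrier (End_ring R M)" and g: "g \<in> carrier (End_ring R M)"
  shows "f \<oplus>\<^bsub>End_ring R M\<^esub> g \<in> carrier (End_ring R M)"
proof -
  have fl: "f \<in> lin_map R M (carrier M) M (carrier M)" and gl: "g \<in> lin_map R M (carrier M) M (carrier M)"
    using f g by (auto simp: End_carrier)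
  have "(\<lambda>x. f x \<oplus>\<^bsub>M\<^esub> g x) \<in> lin_map R M (carrier M) M (carrier M)"
  proof (rule lin_mapI)
    fix x y assume x: "x \<in> carrier M" and y: "y \<in> carrier M"
    have c: "f x \<in> carrier M" "f y \<in> carrier M" "g x \<in> carrier M" "g y \<in> carrier M"
      using x y lin_mapD(1)[OF fl] lin_mapD(1)[OF gl] by auto
    show "f (x \<oplus>\<^bsub>M\<^esub> y) \<oplus>\<^bsub>M\<^esub> g (x \<oplus>\<^bsub>M\<^esub> y) = (f x \<oplus>\<^bsub>M\<^esub> g x) \<oplus>\<^bsub>M\<^esub> (f y \<oplus>\<^bsub>M\<^esub> g y)"
      using lin_mapD(2)[OF fl x y] lin_mapD(2)[OF gl x y] c by (simp add: M.a_ac)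
  next
    fix a x assume a: "a \<in> carrier R" and x: "x \<in> carrier M"
    have c: "f x \<in> carrier M" "g x \<in> carrier M"
      using x lin_mapD(1)[OF fl] lin_mapD(1)[OF gl] by auto
    show "f (a \<odot>\<^bsub>M\<^esub> x) \<oplus>\<^bsub>M\<^esub> g (a \<odot>\<^bsub>M\<^esub> x) = a \<odot>\<^bsub>M\<^esub> (f x \<oplus>\<^bsub>M\<^esub> g x)"
      using lin_mapD(3)[OF fl a x] lin_mapD(3)[OF gl a x] c a by (simp add: smult_r_distr)
  next
    fix x assume x: "x \<in> carrier M" then show "f x \<oplus>\<^bsub>M\<^esub> g x \<in> carrier M"
      using lin_mapD(1)[OF fl] lin_mapD(1)[OF gl] by auto
  qed
  then show ?thesis using End_memI by (simp add: End_add)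
qed

lemma End_mult_closed:
  assumes f: "f \<in> carrier (End_ring R M)" and g: "g \<in> carrier (End_ring R M)"
  shows "f \<otimes>\<^bsub>End_ring R M\<^esub> g \<in> carrier (End_ring R M)"
proof -
  have fl: "f \<in> lin_map R M (carrier M) M (carrier M)" and gl: "g \<in> lin_map R M (carrier M) M (carrier M)"
    using f g by (auto simp: End_carrier)
  have "(\<lambda>x. g (f x)) \<in> lin_map R M (carrier M) M (carrier M)" by (rule lin_map_comp[OF fl gl])
  then show ?thesis using End_memI by (simp add: End_mult compose_def)
qed

lemma End_apply_mult: "x \<in> carrier M \<Longrightarrow> (f \<otimes>\<^bsub>End_ring R M\<^esub> g) x = g (f x)"
  by (simp add: End_mult compose_def)
lemma End_apply_add: "x \<in> carrier M \<Longrightarrow> (f \<oplus>\<^bsub>End_ring R M\<^esub> g) x = f x \<oplus>\<^bsub>M\<^esub> g x"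
  by (simp add: End_add)
lemma End_apply_one: "x \<in> carrier M \<Longrightarrow> \<one>\<^bsub>End_ring R M\<^esub> x = x"
  by (simp add: End_one)
lemma End_apply_zero: "x \<in> carrier M \<Longrightarrow> \<zero>\<^bsub>End_ring R M\<^esub> x = \<zero>\<^bsub>M\<^esub>"
  by (simp add: End_zero)

lemma End_one_closed: "\<one>\<^bsub>End_ring R M\<^esub> \<in> carrier (End_ring R M)"
proof -
  have "(\<lambda>x. x) \<in> lin_map R M (carrier M) M (carrier M)" by (rule lin_mapI) auto
  then show ?thesis using End_memI by (simp add: End_one)
qed

lemma End_zero_closed: "\<zero>\<^bsub>End_ring R M\<^esub> \<in> carrier (End_ring R M)"
proof -
  have "(\<lambda>x. \<zero>\<^bsub>M\<^esub>) \<in> lin_map R M (carrier M) M (carrier M)" by (rule lin_mapI) (auto simp: smult_zero)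
  then show ?thesis using End_memI by (simp add: End_zero)
qed

lemma End_ring_is_ring: "ring (End_ring R M)"
proof (rule ringI)
  show "abelian_group (End_ring R M)"
  proof (rule abelian_groupI)
    show "\<zero>\<^bsub>End_ring R M\<^esub> \<in> carrier (End_ring R M)" by (rule End_zero_closed)
    fix x y z
    assume x: "x \<in> carrier (End_ring R M)" and y: "y \<in> carrier (End_ring R M)" and z: "z \<in> carrier (End_ring R M)"
    show "x \<oplus>\<^bsub>End_ring R M\<^esub> y \<in> carrier (End_ring R M)" by (rule End_add_closed[OF x y])
    show "x \<oplus>\<^bsub>End_ring R M\<^esub> y \<oplus>\<^bsub>End_ring R M\<^esub> z = x \<oplus>\<^bsub>End_ring R M\<^esub> (y \<oplus>\<^bsub>End_ring R M\<^esub> z)"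
      by (rule End_eqI) (use x y z in \<open>auto simp: End_add_closed End_apply_add End_closed M.a_assoc\<close>)
    show "x \<oplus>\<^bsub>End_ring R M\<^esub> y = y \<oplus>\<^bsub>End_ring R M\<^esub> x"
      by (rule End_eqI) (use x y in \<open>auto simp: End_add_closed End_apply_add End_closed M.a_comm\<close>)
    show "\<zero>\<^bsub>End_ring R M\<^esub> \<oplus>\<^bsub>End_ring R M\<^esub> x = x"
      by (rule End_eqI) (use x in \<open>auto simp: End_add_closed End_zero_closed End_apply_add End_apply_zero End_closed\<close>)
  next
    fix x assume x: "x \<in> carrier (End_ring R M)"
    have xl: "x \<in> lin_map R M (carrier M) M (carrier M)" using x by (simp add: End_carrier)
    have "(\<lambda>v. \<ominus>\<^bsub>M\<^esub> x v) \<in> lin_map R M (carrier M) M (carrier M)"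
    proof (rule lin_mapI)
      fix u v assume u: "u \<in> carrier M" and v: "v \<in> carrier M"
      show "\<ominus>\<^bsub>M\<^esub> x (u \<oplus>\<^bsub>M\<^esub> v) = \<ominus>\<^bsub>M\<^esub> x u \<oplus>\<^bsub>M\<^esub> \<ominus>\<^bsub>M\<^esub> x v"
        using lin_mapD[OF xl] u v by (simp add: M.minus_add)
    next
      fix a u assume a: "a \<in> carrier R" and u: "u \<in> carrier M"
      show "\<ominus>\<^bsub>M\<^esub> x (a \<odot>\<^bsub>M\<^esub> u) = a \<odot>\<^bsub>M\<^esub> \<ominus>\<^bsub>M\<^esub> x u"
        using lin_mapD[OF xl] a u by (simp add: smult_minus2)
    qed (use lin_mapD[OF xl] in auto)
    then have yc: "restrict (\<lambda>v. \<ominus>\<^bsub>M\<^esub> x v) (carrier M) \<in> carrier (End_ring R M)" by (rule End_memI)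
    have "restrict (\<lambda>v. \<ominus>\<^bsub>M\<^esub> x v) (carrier M) \<oplus>\<^bsub>End_ring R M\<^esub> x = \<zero>\<^bsub>End_ring R M\<^esub>"
      by (rule End_eqI) (use x yc in \<open>auto simp: End_add_closed End_zero_closed End_apply_add End_apply_zero End_closed M.l_neg\<close>)
    then show "\<exists>y\<in>carrier (End_ring R M). y \<oplus>\<^bsub>End_ring R M\<^esub> x = \<zero>\<^bsub>End_ring R M\<^esub>" using yc by blast
  qed
next
  show "monoid (End_ring R M)"
  proof (rule monoidI)
    show "\<one>\<^bsub>End_ring R M\<^esub> \<in> carrier (End_ring R M)" by (rule End_one_closed)
    fix x y z
    assume x: "x \<in> carrier (End_ring R M)" and y: "y \<in> carrier (End_ring R M)" and z: "z \<in> carrier (End_ring R M)"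
    show "x \<otimes>\<^bsub>End_ring R M\<^esub> y \<in> carrier (End_ring R M)" by (rule End_mult_closed[OF x y])
    show "x \<otimes>\<^bsub>End_ring R M\<^esub> y \<otimes>\<^bsub>End_ring R M\<^esub> z = x \<otimes>\<^bsub>End_ring R M\<^esub> (y \<otimes>\<^bsub>End_ring R M\<^esub> z)"
      by (rule End_eqI) (use x y z in \<open>auto simp: End_mult_closed End_apply_mult End_closed\<close>)
    show "\<one>\<^bsub>End_ring R M\<^esub> \<otimes>\<^bsub>End_ring R M\<^esub> x = x"
      by (rule End_eqI) (use x in \<open>auto simp: End_mult_closed End_one_closed End_apply_mult End_apply_one End_closed\<close>)
    show "x \<otimes>\<^bsub>End_ring R M\<^esub> \<one>\<^bsub>End_ring R M\<^esub> = x"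
      by (rule End_eqI) (use x in \<open>auto simp: End_mult_closed End_one_closed End_apply_mult End_apply_one End_closed\<close>)
  qed
next
  fix x y z
  assume x: "x \<in> carrier (End_ring R M)" and y: "y \<in> carrier (End_ring R M)" and z: "z \<in> carrier (End_ring R M)"
  have zl: "z \<in> lin_map R M (carrier M) M (carrier M)" using z by (simp add: End_carrier)
  show "(x \<oplus>\<^bsub>End_ring R M\<^esub> y) \<otimes>\<^bsub>End_ring R M\<^esub> z = x \<otimes>\<^bsub>End_ring R M\<^esub> z \<oplus>\<^bsub>End_ring R M\<^esub> y \<otimes>\<^bsub>End_ring R M\<^esub> z"
    by (rule End_eqI) (use x y z lin_mapD(2)[OF zl] in \<open>auto simp: End_mult_closed End_add_closed End_apply_mult End_apply_add End_closed\<close>)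
  show "z \<otimes>\<^bsub>End_ring R M\<^esub> (x \<oplus>\<^bsub>End_ring R M\<^esub> y) = z \<otimes>\<^bsub>End_ring R M\<^esub> x \<oplus>\<^bsub>End_ring R M\<^esub> z \<otimes>\<^bsub>End_ring R M\<^esub> y"
    by (rule End_eqI) (use x y z in \<open>auto simp: End_mult_closed End_add_closed End_apply_mult End_apply_add End_closed\<close>)
qed

lemma End_nonzero_iff: "f \<in> carrier (End_ring R M) \<Longrightarrow> f \<noteq> \<zero>\<^bsub>End_ring R M\<^esub> \<longleftrightarrow> (\<exists>x\<in>carrier M. f x \<noteq> \<zero>\<^bsub>M\<^esub>)"
  using End_eqI[OF _ End_zero_closed, of f] End_apply_zero by auto

end


context left_module begin

lemma sub_abelian: "submodule N R M \<Longrightarrow> abelian_subgroup N M"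
  by (rule abelian_subgroupI2[OF M.a_comm_group]) (simp add: submodule_def)

lemma sub_subgroup: "submodule N R M \<Longrightarrow> subgroup N (add_monoid M)"
  by (simp add: submodule_def)

lemma rc_eq:
  assumes N: "submodule N R M" and x: "x \<in> carrier M" and y: "y \<in> carrier M"
  shows "N +>\<^bsub>M\<^esub> x = N +>\<^bsub>M\<^esub> y \<longleftrightarrow> x \<ominus>\<^bsub>M\<^esub> y \<in> N"
proof -
  interpret A: abelian_subgroup N M by (rule sub_abelian[OF N])
  note S = submoduleE[OF N]
  show ?thesis
  proof
    assume e: "N +>\<^bsub>M\<^esub> x = N +>\<^bsub>M\<^esub> y"
    have "x \<in> N +>\<^bsub>M\<^esub> y" using A.a_rcos_self[OF x] e by simp
    then obtain h where h: "h \<in> N" "x = h \<oplus>\<^bsub>M\<^esub> y" unfolding a_r_coset_def' by auto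
    have "x \<ominus>\<^bsub>M\<^esub> y = h" using h S(1) y by (auto simp: M.minus_eq M.a_assoc M.r_neg)
    then show "x \<ominus>\<^bsub>M\<^esub> y \<in> N" using h by simp
  next
    assume d: "x \<ominus>\<^bsub>M\<^esub> y \<in> N"
    have "x = (x \<ominus>\<^bsub>M\<^esub> y) \<oplus>\<^bsub>M\<^esub> y" using x y by (simp add: M.minus_eq M.a_assoc M.l_neg)
    then have "x \<in> N +>\<^bsub>M\<^esub> y" unfolding a_r_coset_def' using d by auto
    then show "N +>\<^bsub>M\<^esub> x = N +>\<^bsub>M\<^esub> y"
      using a_repr_independence[OF _ y sub_subgroup[OF N]] by simp
  qed
qed

lemma rc_zero_iff:
  assumes N: "submodule N R M" and x: "x \<in> carrier M"
  shows "N +>\<^bsub>M\<^esub> x = N \<longleftrightarrow> x \<in> N"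
  using a_coset_join1[OF _ x sub_subgroup[OF N]] a_coset_join2[OF x sub_subgroup[OF N]] by blast

lemma rc_add:
  assumes N: "submodule N R M" and x: "x \<in> carrier M" and y: "y \<in> carrier M"
  shows "(N +>\<^bsub>M\<^esub> x) \<oplus>\<^bsub>quotient_module M N\<^esub> (N +>\<^bsub>M\<^esub> y) = N +>\<^bsub>M\<^esub> (x \<oplus>\<^bsub>M\<^esub> y)"
proof -
  interpret A: abelian_subgroup N M by (rule sub_abelian[OF N])
  show ?thesis using A.a_rcos_sum[OF x y] by (simp add: quotient_module_def)
qed

lemma rc_smult:
  assumes N: "submodule N R M" and a: "a \<in> carrier R" and x: "x \<in> carrier M"
  shows "a \<odot>\<^bsub>quotient_module M N\<^esub> (N +>\<^bsub>M\<^esub> x) = N +>\<^bsub>M\<^esub> (a \<odot>\<^bsub>M\<^esub> x)"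
proof -
  note S = submoduleE[OF N]
  have "set_add M N ((\<lambda>v. a \<odot>\<^bsub>M\<^esub> v) ` (N +>\<^bsub>M\<^esub> x)) = N +>\<^bsub>M\<^esub> (a \<odot>\<^bsub>M\<^esub> x)"
  proof (intro equalityI subsetI)
      fix z
      assume "z \<in> set_add M N ((\<lambda>v. a \<odot>\<^bsub>M\<^esub> v) ` (N +>\<^bsub>M\<^esub> x))"
      then obtain k h where kh: "k \<in> N" "h \<in> N" "z = k \<oplus>\<^bsub>M\<^esub> (a \<odot>\<^bsub>M\<^esub> (h \<oplus>\<^bsub>M\<^esub> x))"
        unfolding set_add_def' a_r_coset_def' by auto
      have hM: "h \<in> carrier M" "k \<in> carrier M" using kh S(1) by auto
      have "z = (k \<oplus>\<^bsub>M\<^esub> a \<odot>\<^bsub>M\<^esub> h) \<oplus>\<^bsub>M\<^esub> a \<odot>\<^bsub>M\<^esub> x"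
        using kh(3) hM a x by (simp add: smult_r_distr smult_closed M.a_assoc)
      moreover have "k \<oplus>\<^bsub>M\<^esub> a \<odot>\<^bsub>M\<^esub> h \<in> N" using S kh a by auto
      ultimately show "z \<in> N +>\<^bsub>M\<^esub> (a \<odot>\<^bsub>M\<^esub> x)" unfolding a_r_coset_def' by auto
    next
      fix z
      assume "z \<in> N +>\<^bsub>M\<^esub> (a \<odot>\<^bsub>M\<^esub> x)"
      then obtain k where k: "k \<in> N" "z = k \<oplus>\<^bsub>M\<^esub> a \<odot>\<^bsub>M\<^esub> x" unfolding a_r_coset_def' by auto
      have "x = \<zero>\<^bsub>M\<^esub> \<oplus>\<^bsub>M\<^esub> x" using x by simp
      then have "x \<in> N +>\<^bsub>M\<^esub> x" unfolding a_r_coset_def' using S(2) by auto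
      then show "z \<in> set_add M N ((\<lambda>v. a \<odot>\<^bsub>M\<^esub> v) ` (N +>\<^bsub>M\<^esub> x))"
        unfolding set_add_def' using k by blast
  qed
  then show ?thesis by (simp add: quotient_module_def)
qed

lemma quot_carrier: "carrier (quotient_module M N) = a_rcosets\<^bsub>M\<^esub> N"
  by (simp add: quotient_module_def)

lemma rc_in_quot: "submodule N R M \<Longrightarrow> x \<in> carrier M \<Longrightarrow> N +>\<^bsub>M\<^esub> x \<in> carrier (quotient_module M N)"
  using a_rcosetsI[of N x] submoduleE(1) by (simp add: quot_carrier)

lemma quot_elem: "C \<in> carrier (quotient_module M N) \<Longrightarrow> \<exists>x\<in>carrier M. C = N +>\<^bsub>M\<^esub> x"
  by (auto simp: quot_carrier A_RCOSETS_def')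

end


context left_module begin

lemma minus_zero_iff: "a \<in> carrier M \<Longrightarrow> b \<in> carrier M \<Longrightarrow> a \<ominus>\<^bsub>M\<^esub> b = \<zero>\<^bsub>M\<^esub> \<longleftrightarrow> a = b"
proof
  assume a: "a \<in> carrier M" and b: "b \<in> carrier M" and e: "a \<ominus>\<^bsub>M\<^esub> b = \<zero>\<^bsub>M\<^esub>"
  have "a = (a \<ominus>\<^bsub>M\<^esub> b) \<oplus>\<^bsub>M\<^esub> b" using a b by (simp add: M.minus_eq M.a_assoc M.l_neg)
  then show "a = b" using e b by simp
next
  assume a: "a \<in> carrier M" and b: "b \<in> carrier M" and e: "a = b"
  then show "a \<ominus>\<^bsub>M\<^esub> b = \<zero>\<^bsub>M\<^esub>" by (simp add: M.minus_eq M.r_neg)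
qed

lemma self_lm: "left_module R M" by (rule left_module_axioms)

lemma cc_imp_monoform:
  assumes cc: "critically_compressible R M"
  shows "monoform R M"
proof -
  have comp: "compressible R M" using cc by (simp add: critically_compressible_def)
  then have nz: "nonzero_module M" by (simp add: compressible_def)
  show ?thesis unfolding monoform_def
  proof (intro conjI nz allI impI)
    fix N f
    assume N: "submodule N R M" and fl: "f \<in> lin_map R M N M (carrier M)" and ex: "\<exists>x\<in>N. f x \<noteq> \<zero>\<^bsub>M\<^esub>"
    note S = submoduleE[OF N]
    note lm = self_lm
    show "inj_on f N"
    proof (rule ccontr)
      assume ni: "\<not> inj_on f N"
      define K where "K = {x\<in>N. f x = \<zero>\<^bsub>M\<^esub>}"
      have Ks: "submodule K R M" unfolding K_def by (rule kernel_submodule[OF lm lm N fl subset_refl])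
      obtain k where k: "k \<in> N" "f k = \<zero>\<^bsub>M\<^esub>" "k \<noteq> \<zero>\<^bsub>M\<^esub>"
        using ni lin_map_inj_iff[OF lm lm N fl subset_refl] by auto
      have Knz: "nonzero_submodule R M K" unfolding nonzero_submodule_def using Ks k K_def by auto
      have Is: "submodule (f ` N) R M" by (rule image_submodule[OF lm lm N fl subset_refl])
      have Inz: "nonzero_submodule R M (f ` N)" unfolding nonzero_submodule_def using Is ex by auto
      obtain u where ul: "u \<in> lin_map R M (carrier M) M (f ` N)" and ui: "inj_on u (carrier M)"
        using comp Inz unfolding compressible_def embeds_def by blast
      define pre where "pre m = (SOME n. n \<in> N \<and> f n = u m)" for m
      have pre: "pre m \<in> N \<and> f (pre m) = u m" if "m \<in> carrier M" for m
      proof -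
        have "u m \<in> f ` N" using lin_mapD(1)[OF ul that] .
        then have "\<exists>n. n \<in> N \<and> f n = u m" by auto
        then show ?thesis unfolding pre_def by (rule someI_ex)
      qed
      have preM: "pre m \<in> carrier M" if "m \<in> carrier M" for m using pre[OF that] S(1) by auto
      have inK: "a \<ominus>\<^bsub>M\<^esub> b \<in> K" if "a \<in> N" "b \<in> N" "f a = f b" for a b
      proof -
        have "a \<ominus>\<^bsub>M\<^esub> b \<in> N" using S that by (simp add: M.minus_eq)
        moreover have "f (a \<ominus>\<^bsub>M\<^esub> b) = \<zero>\<^bsub>M\<^esub>"
          using lin_map_diff[OF lm lm N fl subset_refl that(1,2)] that lin_mapD(1)[OF fl] minus_zero_iff by auto
        ultimately show ?thesis unfolding K_def by auto
      qed
      define h where "h m = K +>\<^bsub>M\<^esub> pre m" for m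
      let ?Q = "quotient_module M K"
      have hl: "h \<in> lin_map R M (carrier M) ?Q (carrier ?Q)"
      proof (rule lin_mapI)
        fix m assume "m \<in> carrier M" then show "h m \<in> carrier ?Q" unfolding h_def using rc_in_quot[OF Ks] preM by auto
      next
        fix x y assume x: "x \<in> carrier M" and y: "y \<in> carrier M"
        have xy: "x \<oplus>\<^bsub>M\<^esub> y \<in> carrier M" using x y by simp
        have "pre (x \<oplus>\<^bsub>M\<^esub> y) \<ominus>\<^bsub>M\<^esub> (pre x \<oplus>\<^bsub>M\<^esub> pre y) \<in> K"
          using inK[of "pre (x \<oplus>\<^bsub>M\<^esub> y)" "pre x \<oplus>\<^bsub>M\<^esub> pre y"] pre[OF x] pre[OF y] pre[OF xy] S(3)
            lin_mapD(2)[OF fl] lin_mapD(2)[OF ul x y] by auto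
        then have "h (x \<oplus>\<^bsub>M\<^esub> y) = K +>\<^bsub>M\<^esub> (pre x \<oplus>\<^bsub>M\<^esub> pre y)"
          unfolding h_def using rc_eq[OF Ks] preM x y xy by simp
        then show "h (x \<oplus>\<^bsub>M\<^esub> y) = h x \<oplus>\<^bsub>?Q\<^esub> h y"
          unfolding h_def using rc_add[OF Ks] preM x y by simp
      next
        fix a x assume a: "a \<in> carrier R" and x: "x \<in> carrier M"
        have ax: "a \<odot>\<^bsub>M\<^esub> x \<in> carrier M" using a x smult_closed by simp
        have "pre (a \<odot>\<^bsub>M\<^esub> x) \<ominus>\<^bsub>M\<^esub> (a \<odot>\<^bsub>M\<^esub> pre x) \<in> K"
          using inK[of "pre (a \<odot>\<^bsub>M\<^esub> x)" "a \<odot>\<^bsub>M\<^esub> pre x"] pre[OF x] pre[OF ax] S(5)[OF a]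
            lin_mapD(3)[OF fl a] lin_mapD(3)[OF ul a x] by auto
        then have "h (a \<odot>\<^bsub>M\<^esub> x) = K +>\<^bsub>M\<^esub> (a \<odot>\<^bsub>M\<^esub> pre x)"
          unfolding h_def using rc_eq[OF Ks] preM x ax a smult_closed by simp
        then show "h (a \<odot>\<^bsub>M\<^esub> x) = a \<odot>\<^bsub>?Q\<^esub> h x"
          unfolding h_def using rc_smult[OF Ks a] preM x by simp
      qed
      have hi: "inj_on h (carrier M)"
      proof (rule inj_onI)
        fix x y assume x: "x \<in> carrier M" and y: "y \<in> carrier M" and e: "h x = h y"
        then have "pre x \<ominus>\<^bsub>M\<^esub> pre y \<in> K" unfolding h_def using rc_eq[OF Ks] preM by simp
        then have "f (pre x \<ominus>\<^bsub>M\<^esub> pre y) = \<zero>\<^bsub>M\<^esub>" unfolding K_def by simp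
        then have "f (pre x) \<ominus>\<^bsub>M\<^esub> f (pre y) = \<zero>\<^bsub>M\<^esub>"
          using lin_map_diff[OF lm lm N fl subset_refl] pre[OF x] pre[OF y] by simp
        then have "f (pre x) = f (pre y)"
          using minus_zero_iff lin_mapD(1)[OF fl] pre[OF x] pre[OF y] by blast
        then have "u x = u y" using pre[OF x] pre[OF y] by simp
        then show "x = y" using ui x y by (meson inj_onD)
      qed
      have "embeds R M (carrier M) ?Q (carrier ?Q)" unfolding embeds_def using hl hi by blast
      then show False using cc Knz unfolding critically_compressible_def by blast
    qed
  qed
qed

lemma cm_imp_cc:
  assumes comp: "compressible R M" and mono: "monoform R M"
  shows "critically_compressible R M"
  unfolding critically_compressible_def
proof (intro conjI comp allI impI notI)
  fix N assume Nnz: "nonzero_submodule R M N"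
    and emb: "embeds R M (carrier M) (quotient_module M N) (carrier (quotient_module M N))"
  have N: "submodule N R M" using Nnz by (simp add: nonzero_submodule_def)
  note S = submoduleE[OF N]
  let ?Q = "quotient_module M N"
  obtain h where hl: "h \<in> lin_map R M (carrier M) ?Q (carrier ?Q)" and hi: "inj_on h (carrier M)"
    using emb unfolding embeds_def by blast
  have hrep: "\<exists>x\<in>carrier M. h m = N +>\<^bsub>M\<^esub> x" if "m \<in> carrier M" for m
    using quot_elem lin_mapD(1)[OF hl that] by blast
  have h0: "h \<zero>\<^bsub>M\<^esub> = N"
  proof -
    obtain x where x: "x \<in> carrier M" "h \<zero>\<^bsub>M\<^esub> = N +>\<^bsub>M\<^esub> x" using hrep by blast
    have "h \<zero>\<^bsub>M\<^esub> = h (\<zero>\<^bsub>R\<^esub> \<odot>\<^bsub>M\<^esub> \<zero>\<^bsub>M\<^esub>)" by (simp add: zero_smult)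
    also have "\<dots> = \<zero>\<^bsub>R\<^esub> \<odot>\<^bsub>?Q\<^esub> h \<zero>\<^bsub>M\<^esub>" using lin_mapD(3)[OF hl] by simp
    also have "\<dots> = N +>\<^bsub>M\<^esub> \<zero>\<^bsub>M\<^esub>" using rc_smult[OF N _ x(1), of "\<zero>\<^bsub>R\<^esub>"] x zero_smult by simp
    also have "\<dots> = N" using rc_zero_iff[OF N] S(2) by simp
    finally show ?thesis .
  qed
  define L where "L = {x\<in>carrier M. N +>\<^bsub>M\<^esub> x \<in> h ` carrier M}"
  define g where "g x = inv_into (carrier M) h (N +>\<^bsub>M\<^esub> x)" for x
  have hg: "h (g x) = N +>\<^bsub>M\<^esub> x" "g x \<in> carrier M" if "x \<in> L" for x
  proof -
    have "N +>\<^bsub>M\<^esub> x \<in> h ` carrier M" using that L_def by auto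
    then show "h (g x) = N +>\<^bsub>M\<^esub> x" "g x \<in> carrier M" by (simp_all add: g_def f_inv_into_f inv_into_into)
  qed
  have gh: "g x = m" if "x \<in> carrier M" "m \<in> carrier M" "h m = N +>\<^bsub>M\<^esub> x" for x m
    using that hi unfolding g_def by (metis inv_into_f_f)
  have Lsm: "a \<odot>\<^bsub>M\<^esub> x \<in> L \<and> h (a \<odot>\<^bsub>M\<^esub> g x) = N +>\<^bsub>M\<^esub> (a \<odot>\<^bsub>M\<^esub> x)" if a: "a \<in> carrier R" and x: "x \<in> L" for a x
  proof -
    have xM: "x \<in> carrier M" using x L_def by auto
    have "h (a \<odot>\<^bsub>M\<^esub> g x) = a \<odot>\<^bsub>?Q\<^esub> h (g x)" using lin_mapD(3)[OF hl a hg(2)[OF x]] .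
    also have "\<dots> = N +>\<^bsub>M\<^esub> (a \<odot>\<^bsub>M\<^esub> x)" using hg(1)[OF x] rc_smult[OF N a xM] by simp
    finally have e: "h (a \<odot>\<^bsub>M\<^esub> g x) = N +>\<^bsub>M\<^esub> (a \<odot>\<^bsub>M\<^esub> x)" .
    then show ?thesis unfolding L_def using xM a smult_closed hg(2)[OF x]
      by blast
  qed
  have Ladd: "x \<oplus>\<^bsub>M\<^esub> y \<in> L \<and> h (g x \<oplus>\<^bsub>M\<^esub> g y) = N +>\<^bsub>M\<^esub> (x \<oplus>\<^bsub>M\<^esub> y)" if x: "x \<in> L" and y: "y \<in> L" for x y
  proof -
    have xM: "x \<in> carrier M" "y \<in> carrier M" using x y L_def by auto
    have "h (g x \<oplus>\<^bsub>M\<^esub> g y) = h (g x) \<oplus>\<^bsub>?Q\<^esub> h (g y)" using lin_mapD(2)[OF hl hg(2)[OF x] hg(2)[OF y]] .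
    also have "\<dots> = N +>\<^bsub>M\<^esub> (x \<oplus>\<^bsub>M\<^esub> y)" using hg(1)[OF x] hg(1)[OF y] rc_add[OF N xM] by simp
    finally have e: "h (g x \<oplus>\<^bsub>M\<^esub> g y) = N +>\<^bsub>M\<^esub> (x \<oplus>\<^bsub>M\<^esub> y)" .
    then show ?thesis unfolding L_def using xM hg(2)[OF x] hg(2)[OF y]
      by blast
  qed
  have L0: "\<zero>\<^bsub>M\<^esub> \<in> L" unfolding L_def using h0 rc_zero_iff[OF N] S(2)
    by blast
  have Ls: "submodule L R M"
  proof (rule submoduleI')
    show "L \<subseteq> carrier M" unfolding L_def by auto
    show "\<zero>\<^bsub>M\<^esub> \<in> L" by (rule L0)
    show "x \<oplus>\<^bsub>M\<^esub> y \<in> L" if "x \<in> L" "y \<in> L" for x y using Ladd that by blast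
    show "a \<odot>\<^bsub>M\<^esub> x \<in> L" if "a \<in> carrier R" "x \<in> L" for a x using Lsm that by blast
    show "\<ominus>\<^bsub>M\<^esub> x \<in> L" if x: "x \<in> L" for x
    proof -
      have "(\<ominus>\<^bsub>R\<^esub> \<one>\<^bsub>R\<^esub>) \<odot>\<^bsub>M\<^esub> x \<in> L" using Lsm x by blast
      moreover have "(\<ominus>\<^bsub>R\<^esub> \<one>\<^bsub>R\<^esub>) \<odot>\<^bsub>M\<^esub> x = \<ominus>\<^bsub>M\<^esub> x" using x L_def smult_minus smult_one by auto
      ultimately show ?thesis by simp
    qed
  qed
  have gl: "g \<in> lin_map R M L M (carrier M)"
  proof (rule lin_mapI)
    show "g x \<in> carrier M" if "x \<in> L" for x using hg that by blast
    show "g (x \<oplus>\<^bsub>M\<^esub> y) = g x \<oplus>\<^bsub>M\<^esub> g y" if x: "x \<in> L" and y: "y \<in> L" for x y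
      using gh[of "x \<oplus>\<^bsub>M\<^esub> y" "g x \<oplus>\<^bsub>M\<^esub> g y"] Ladd[OF x y] hg(2)[OF x] hg(2)[OF y] L_def by auto
    show "g (a \<odot>\<^bsub>M\<^esub> x) = a \<odot>\<^bsub>M\<^esub> g x" if a: "a \<in> carrier R" and x: "x \<in> L" for a x
      using gh[of "a \<odot>\<^bsub>M\<^esub> x" "a \<odot>\<^bsub>M\<^esub> g x"] Lsm[OF a x] hg(2)[OF x] L_def a smult_closed by auto
  qed
  have nzM: "nonzero_module M" using comp by (simp add: compressible_def)
  obtain m where m: "m \<in> carrier M" "m \<noteq> \<zero>\<^bsub>M\<^esub>" using nzM M.zero_closed unfolding nonzero_module_def by blast
  obtain x where x: "x \<in> carrier M" "h m = N +>\<^bsub>M\<^esub> x" using hrep[OF m(1)] by blast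
  have xL: "x \<in> L" unfolding L_def using x m by blast
  have "g x = m" using gh x m by auto
  then have ex: "\<exists>x\<in>L. g x \<noteq> \<zero>\<^bsub>M\<^esub>" using xL m by auto
  have ginj: "inj_on g L" using mono Ls gl ex unfolding monoform_def by blast
  obtain n where n: "n \<in> N" "n \<noteq> \<zero>\<^bsub>M\<^esub>" using Nnz S(2) unfolding nonzero_submodule_def by blast
  have nM: "n \<in> carrier M" using n S(1) by auto
  have hn: "h \<zero>\<^bsub>M\<^esub> = N +>\<^bsub>M\<^esub> n" using h0 rc_zero_iff[OF N nM] n by simp
  have nL: "n \<in> L" unfolding L_def using nM hn by blast
  have "g n = \<zero>\<^bsub>M\<^esub>" using gh[OF nM M.zero_closed hn] .
  moreover have "g \<zero>\<^bsub>M\<^esub> = \<zero>\<^bsub>M\<^esub>"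
  proof -
    have "N +>\<^bsub>M\<^esub> \<zero>\<^bsub>M\<^esub> = N" using rc_zero_iff[OF N M.zero_closed] S(2) by simp
    then show ?thesis using gh[OF M.zero_closed M.zero_closed] h0 by simp
  qed
  ultimately show False using ginj nL L0 n(2) by (metis inj_onD)
qed

lemma part_a_b: "critically_compressible R M \<longleftrightarrow> compressible R M \<and> monoform R M"
  using cc_imp_monoform cm_imp_cc critically_compressible_def by blast

end


context left_module begin

lemma mono_inj:
  assumes mono: "monoform R M" and N: "submodule N R M" and fl: "f \<in> lin_map R M N M (carrier M)"
    and ex: "\<exists>x\<in>N. f x \<noteq> \<zero>\<^bsub>M\<^esub>" and y: "y \<in> N" "y \<noteq> \<zero>\<^bsub>M\<^esub>"
  shows "f y \<noteq> \<zero>\<^bsub>M\<^esub>"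
proof -
  have "inj_on f N" using mono N fl ex unfolding monoform_def by blast
  then show ?thesis using lin_map_inj_iff[OF self_lm self_lm N fl subset_refl] y by blast
qed

lemma mono_uniform:
  assumes mono: "monoform R M" and A: "nonzero_submodule R M A" and B: "nonzero_submodule R M B"
  shows "\<exists>x\<in>A \<inter> B. x \<noteq> \<zero>\<^bsub>M\<^esub>"
proof (rule ccontr)
  assume "\<not> (\<exists>x\<in>A \<inter> B. x \<noteq> \<zero>\<^bsub>M\<^esub>)"
  then have AB: "\<And>x. x \<in> A \<Longrightarrow> x \<in> B \<Longrightarrow> x = \<zero>\<^bsub>M\<^esub>" by blast
  have As: "submodule A R M" and Bs: "submodule B R M" using A B by (auto simp: nonzero_submodule_def)
  note SA = submoduleE[OF As] and SB = submoduleE[OF Bs]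
  have uniq: "a = a'" if "a \<in> A" "a' \<in> A" "b \<in> B" "b' \<in> B" "a \<oplus>\<^bsub>M\<^esub> b = a' \<oplus>\<^bsub>M\<^esub> b'" for a a' b b'
  proof -
    have c: "a \<in> carrier M" "a' \<in> carrier M" "b \<in> carrier M" "b' \<in> carrier M" using that SA(1) SB(1) by auto
    have "a \<ominus>\<^bsub>M\<^esub> a' = b' \<ominus>\<^bsub>M\<^esub> b"
    proof -
      have "a \<ominus>\<^bsub>M\<^esub> a' = (a \<oplus>\<^bsub>M\<^esub> b) \<ominus>\<^bsub>M\<^esub> (a' \<oplus>\<^bsub>M\<^esub> b) " using c
        by (simp add: M.minus_eq M.minus_add M.a_ac M.r_neg)
      also have "\<dots> = (a' \<oplus>\<^bsub>M\<^esub> b') \<ominus>\<^bsub>M\<^esub> (a' \<oplus>\<^bsub>M\<^esub> b)" using that by simp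
      also have "\<dots> = a' \<oplus>\<^bsub>M\<^esub> (\<ominus>\<^bsub>M\<^esub> a' \<oplus>\<^bsub>M\<^esub> (b' \<oplus>\<^bsub>M\<^esub> \<ominus>\<^bsub>M\<^esub> b))" using c by (simp add: M.minus_eq M.minus_add M.a_ac)
      also have "\<dots> = b' \<ominus>\<^bsub>M\<^esub> b" using c by (simp add: M.minus_eq M.r_neg2)
      finally show ?thesis .
    qed
    moreover have "a \<ominus>\<^bsub>M\<^esub> a' \<in> A" "b' \<ominus>\<^bsub>M\<^esub> b \<in> B" using SA SB that by (auto simp: M.minus_eq)
    ultimately have "a \<ominus>\<^bsub>M\<^esub> a' = \<zero>\<^bsub>M\<^esub>" using AB by metis
    then show ?thesis using minus_zero_iff c by blast
  qed
  define S where "S = {a \<oplus>\<^bsub>M\<^esub> b | a b. a \<in> A \<and> b \<in> B}"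
  define p where "p s = (SOME a. a \<in> A \<and> (\<exists>b\<in>B. s = a \<oplus>\<^bsub>M\<^esub> b))" for s
  have p: "p (a \<oplus>\<^bsub>M\<^esub> b) = a" if "a \<in> A" "b \<in> B" for a b
  proof -
    have "\<exists>a'. a' \<in> A \<and> (\<exists>b'\<in>B. a \<oplus>\<^bsub>M\<^esub> b = a' \<oplus>\<^bsub>M\<^esub> b')" using that by blast
    then have "p (a \<oplus>\<^bsub>M\<^esub> b) \<in> A \<and> (\<exists>b'\<in>B. a \<oplus>\<^bsub>M\<^esub> b = p (a \<oplus>\<^bsub>M\<^esub> b) \<oplus>\<^bsub>M\<^esub> b')"
      unfolding p_def by (rule someI_ex)
    then show ?thesis using uniq that by metis
  qed
  have Ss: "submodule S R M"
  proof (rule submoduleI')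
    show "S \<subseteq> carrier M" unfolding S_def using SA(1) SB(1) by auto
    show "\<zero>\<^bsub>M\<^esub> \<in> S" unfolding S_def using SA(2) SB(2) by force
    show "x \<oplus>\<^bsub>M\<^esub> y \<in> S" if xyS: "x \<in> S" "y \<in> S" for x y
    proof -
      obtain a b a' b' where "x = a \<oplus>\<^bsub>M\<^esub> b" "y = a' \<oplus>\<^bsub>M\<^esub> b'" "a \<in> A" "b \<in> B" "a' \<in> A" "b' \<in> B"
        using xyS S_def by auto
      moreover then have "x \<oplus>\<^bsub>M\<^esub> y = (a \<oplus>\<^bsub>M\<^esub> a') \<oplus>\<^bsub>M\<^esub> (b \<oplus>\<^bsub>M\<^esub> b')"
        using SA(1) SB(1) by (auto simp: M.a_ac subsetD[OF SA(1)] subsetD[OF SB(1)])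
      ultimately show ?thesis unfolding S_def using SA(3) SB(3) by blast
    qed
    show "\<ominus>\<^bsub>M\<^esub> x \<in> S" if xyS: "x \<in> S" for x
    proof -
      obtain a b where "x = a \<oplus>\<^bsub>M\<^esub> b" "a \<in> A" "b \<in> B" using xyS S_def by auto
      moreover then have "\<ominus>\<^bsub>M\<^esub> x = (\<ominus>\<^bsub>M\<^esub> a) \<oplus>\<^bsub>M\<^esub> (\<ominus>\<^bsub>M\<^esub> b)"
        using SA(1) SB(1) by (auto simp: M.minus_add M.a_comm subsetD[OF SA(1)] subsetD[OF SB(1)])
      ultimately show ?thesis unfolding S_def using SA(4) SB(4) by blast
    qed
    show "c \<odot>\<^bsub>M\<^esub> x \<in> S" if cR: "c \<in> carrier R" and xyS: "x \<in> S" for c x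
    proof -
      obtain a b where "x = a \<oplus>\<^bsub>M\<^esub> b" "a \<in> A" "b \<in> B" using xyS S_def by auto
      moreover then have "c \<odot>\<^bsub>M\<^esub> x = (c \<odot>\<^bsub>M\<^esub> a) \<oplus>\<^bsub>M\<^esub> (c \<odot>\<^bsub>M\<^esub> b)"
        using SA(1) SB(1) cR by (auto simp: smult_r_distr subsetD[OF SA(1)] subsetD[OF SB(1)])
      ultimately show ?thesis unfolding S_def using SA(5) SB(5) cR by blast
    qed
  qed
  have pl: "p \<in> lin_map R M S M (carrier M)"
  proof (rule lin_mapI)
    show "p x \<in> carrier M" if "x \<in> S" for x using that p SA(1) unfolding S_def by auto
    show "p (x \<oplus>\<^bsub>M\<^esub> y) = p x \<oplus>\<^bsub>M\<^esub> p y" if xyS: "x \<in> S" "y \<in> S" for x y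
    proof -
      obtain a b a' b' where ab: "x = a \<oplus>\<^bsub>M\<^esub> b" "y = a' \<oplus>\<^bsub>M\<^esub> b'" "a \<in> A" "b \<in> B" "a' \<in> A" "b' \<in> B"
        using xyS S_def by auto
      moreover then have "x \<oplus>\<^bsub>M\<^esub> y = (a \<oplus>\<^bsub>M\<^esub> a') \<oplus>\<^bsub>M\<^esub> (b \<oplus>\<^bsub>M\<^esub> b')"
        using SA(1) SB(1) by (auto simp: M.a_ac subsetD[OF SA(1)] subsetD[OF SB(1)])
      ultimately show ?thesis using p SA(3) SB(3) by simp
    qed
    show "p (c \<odot>\<^bsub>M\<^esub> x) = c \<odot>\<^bsub>M\<^esub> p x" if cR: "c \<in> carrier R" and xyS: "x \<in> S" for c x
    proof -
      obtain a b where "x = a \<oplus>\<^bsub>M\<^esub> b" "a \<in> A" "b \<in> B" using xyS S_def by auto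
      moreover then have "c \<odot>\<^bsub>M\<^esub> x = (c \<odot>\<^bsub>M\<^esub> a) \<oplus>\<^bsub>M\<^esub> (c \<odot>\<^bsub>M\<^esub> b)"
        using SA(1) SB(1) cR by (auto simp: smult_r_distr subsetD[OF SA(1)] subsetD[OF SB(1)])
      ultimately show ?thesis using p SA(5) SB(5) cR by simp
    qed
  qed
  obtain a where a: "a \<in> A" "a \<noteq> \<zero>\<^bsub>M\<^esub>" using A SA(2) unfolding nonzero_submodule_def by blast
  obtain b where b: "b \<in> B" "b \<noteq> \<zero>\<^bsub>M\<^esub>" using B SB(2) unfolding nonzero_submodule_def by blast
  have aS: "a \<in> S" and pa: "p a = a"
  proof -
    have "a = a \<oplus>\<^bsub>M\<^esub> \<zero>\<^bsub>M\<^esub>" using a SA(1) by auto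
    then show "a \<in> S" "p a = a" unfolding S_def using a SB(2) p[of a "\<zero>\<^bsub>M\<^esub>"] by auto
  qed
  have bS: "b \<in> S" and pb: "p b = \<zero>\<^bsub>M\<^esub>"
  proof -
    have "b = \<zero>\<^bsub>M\<^esub> \<oplus>\<^bsub>M\<^esub> b" using b SB(1) by auto
    then show "b \<in> S" "p b = \<zero>\<^bsub>M\<^esub>" unfolding S_def using b SA(2) p[of "\<zero>\<^bsub>M\<^esub>" b] by auto
  qed
  have ex: "\<exists>x\<in>S. p x \<noteq> \<zero>\<^bsub>M\<^esub>" using aS pa a(2) by metis
  show False using mono_inj[OF mono Ss pl ex bS b(2)] pb by simp
qed

lemma inv_endo:
  assumes al: "a \<in> lin_map R M (carrier M) M (carrier M)" and ai: "inj_on a (carrier M)"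
    and ul: "u \<in> lin_map R M (carrier M) M (carrier M)" and ui: "\<And>x. x \<in> carrier M \<Longrightarrow> u x \<in> a ` carrier M"
  shows "(\<lambda>x\<in>carrier M. inv_into (carrier M) a (u x)) \<in> carrier (End_ring R M)"
    "\<And>x. x \<in> carrier M \<Longrightarrow> a ((\<lambda>x\<in>carrier M. inv_into (carrier M) a (u x)) x) = u x"
proof -
  define s where "s x = inv_into (carrier M) a (u x)" for x
  have as: "a (s x) = u x" "s x \<in> carrier M" if "x \<in> carrier M" for x
    using ui[OF that] unfolding s_def by (auto simp: f_inv_into_f inv_into_into)
  have "s \<in> lin_map R M (carrier M) M (carrier M)"
  proof (rule lin_mapI)
    show "s x \<in> carrier M" if "x \<in> carrier M" for x using as that by blast
    show "s (x \<oplus>\<^bsub>M\<^esub> y) = s x \<oplus>\<^bsub>M\<^esub> s y" if x: "x \<in> carrier M" and y: "y \<in> carrier M" for x y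
    proof -
      have "a (s (x \<oplus>\<^bsub>M\<^esub> y)) = a (s x \<oplus>\<^bsub>M\<^esub> s y)"
        using as x y lin_mapD(2)[OF ul x y] lin_mapD(2)[OF al, of "s x" "s y"] by simp
      then show ?thesis using ai as x y by (meson M.add.m_closed inj_onD)
    qed
    show "s (c \<odot>\<^bsub>M\<^esub> x) = c \<odot>\<^bsub>M\<^esub> s x" if c: "c \<in> carrier R" and x: "x \<in> carrier M" for c x
    proof -
      have "a (s (c \<odot>\<^bsub>M\<^esub> x)) = a (c \<odot>\<^bsub>M\<^esub> s x)"
        using as x c smult_closed lin_mapD(3)[OF ul c x] lin_mapD(3)[OF al c, of "s x"] by simp
      then show ?thesis using ai as x c smult_closed by (meson inj_onD)
    qed
  qed
  then show "(\<lambda>x\<in>carrier M. inv_into (carrier M) a (u x)) \<in> carrier (End_ring R M)"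
    using End_memI unfolding s_def by simp
  show "\<And>x. x \<in> carrier M \<Longrightarrow> a ((\<lambda>x\<in>carrier M. inv_into (carrier M) a (u x)) x) = u x"
    using as unfolding s_def by simp
qed

lemma End_lin: "f \<in> carrier (End_ring R M) \<Longrightarrow> f \<in> lin_map R M (carrier M) M (carrier M)"
  by (simp add: End_carrier)

lemma submodule_Int:
  assumes A: "submodule A R M" and B: "submodule B R M"
  shows "submodule (A \<inter> B) R M"
proof -
  note SA = submoduleE[OF A] and SB = submoduleE[OF B]
  show ?thesis
  proof (rule submoduleI')
    show "A \<inter> B \<subseteq> carrier M" using SA(1) by blast
    show "\<zero>\<^bsub>M\<^esub> \<in> A \<inter> B" using SA(2) SB(2) by blast
    show "x \<oplus>\<^bsub>M\<^esub> y \<in> A \<inter> B" if "x \<in> A \<inter> B" "y \<in> A \<inter> B" for x y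
      using SA(3) SB(3) that by blast
    show "\<ominus>\<^bsub>M\<^esub> x \<in> A \<inter> B" if "x \<in> A \<inter> B" for x
      using SA(4) SB(4) that by blast
    show "c \<odot>\<^bsub>M\<^esub> x \<in> A \<inter> B" if "c \<in> carrier R" "x \<in> A \<inter> B" for c x
      using SA(5) SB(5) that by blast
  qed
qed

lemma cm_imp_fr_ore:
  assumes comp: "compressible R M" and mono: "monoform R M"
  shows "fully_retractable R M \<and> left_ore_domain (End_ring R M)"
proof -
  let ?E = "End_ring R M"
  interpret ER: ring ?E by (rule End_ring_is_ring)
  have nzM: "nonzero_module M" using comp by (simp add: compressible_def)
  obtain m where m: "m \<in> carrier M" "m \<noteq> \<zero>\<^bsub>M\<^esub>" using nzM M.zero_closed unfolding nonzero_module_def by blast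
  have CM: "submodule (carrier M) R M" by (rule submodule_carrier)
  have endinj: "f y \<noteq> \<zero>\<^bsub>M\<^esub>" if "f \<in> carrier ?E" "f \<noteq> \<zero>\<^bsub>?E\<^esub>" "y \<in> carrier M" "y \<noteq> \<zero>\<^bsub>M\<^esub>" for f y
    using mono_inj[OF mono CM End_lin[OF that(1)] _ that(3,4)] End_nonzero_iff[OF that(1)] that(2) by blast
  have fr: "fully_retractable R M"
    unfolding fully_retractable_def
  proof (intro allI impI)
    fix N g assume N: "nonzero_submodule R M N" and gl: "g \<in> lin_map R M N M (carrier M)"
      and ex: "\<exists>y\<in>N. g y \<noteq> \<zero>\<^bsub>M\<^esub>"
    have Ns: "submodule N R M" using N by (simp add: nonzero_submodule_def)
    obtain u where ul: "u \<in> lin_map R M (carrier M) M N" and ui: "inj_on u (carrier M)"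
      using comp N unfolding compressible_def embeds_def by blast
    have ul': "u \<in> lin_map R M (carrier M) M (carrier M)" using lin_map_mono[OF ul subset_refl] submoduleE(1)[OF Ns] lin_mapD(1)[OF ul] by blast
    have u0: "u m \<noteq> \<zero>\<^bsub>M\<^esub>"
      using lin_map_inj_iff[OF self_lm self_lm CM ul' subset_refl] ui m by blast
    have "g (u m) \<noteq> \<zero>\<^bsub>M\<^esub>" using mono_inj[OF mono Ns gl ex] lin_mapD(1)[OF ul m(1)] u0 by blast
    then show "\<exists>h\<in>lin_map R M (carrier M) M N. \<exists>x\<in>carrier M. g (h x) \<noteq> \<zero>\<^bsub>M\<^esub>" using ul m by blast
  qed
  have one_nz: "\<one>\<^bsub>?E\<^esub> \<noteq> \<zero>\<^bsub>?E\<^esub>" using End_nonzero_iff[OF End_one_closed] m End_apply_one by auto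
  have dom: "nc_domain ?E" unfolding nc_domain_def
  proof (intro conjI ballI impI ER.ring_axioms one_nz)
    fix a b assume a: "a \<in> carrier ?E" and b: "b \<in> carrier ?E" and ab: "a \<otimes>\<^bsub>?E\<^esub> b = \<zero>\<^bsub>?E\<^esub>"
    show "a = \<zero>\<^bsub>?E\<^esub> \<or> b = \<zero>\<^bsub>?E\<^esub>"
    proof (rule ccontr)
      assume "\<not> (a = \<zero>\<^bsub>?E\<^esub> \<or> b = \<zero>\<^bsub>?E\<^esub>)"
      then have "a \<noteq> \<zero>\<^bsub>?E\<^esub>" and "b \<noteq> \<zero>\<^bsub>?E\<^esub>" by auto
      then have am: "a m \<noteq> \<zero>\<^bsub>M\<^esub>" using endinj[OF a _ m(1) m(2)] by simp
      have "b (a m) \<noteq> \<zero>\<^bsub>M\<^esub>" using endinj[OF b \<open>b \<noteq> \<zero>\<^bsub>?E\<^esub>\<close> End_closed[OF a m(1)] am] .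
      then show False using ab End_apply_mult[OF m(1), of a b] End_apply_zero[OF m(1)] by simp
    qed
  qed
  have ore: "\<exists>s\<in>carrier ?E. \<exists>t\<in>carrier ?E. s \<otimes>\<^bsub>?E\<^esub> a = t \<otimes>\<^bsub>?E\<^esub> b \<and> s \<otimes>\<^bsub>?E\<^esub> a \<noteq> \<zero>\<^bsub>?E\<^esub>"
    if a: "a \<in> carrier ?E - {\<zero>\<^bsub>?E\<^esub>}" and b: "b \<in> carrier ?E - {\<zero>\<^bsub>?E\<^esub>}" for a b
  proof -
    have ac: "a \<in> carrier ?E" "a \<noteq> \<zero>\<^bsub>?E\<^esub>" and bc: "b \<in> carrier ?E" "b \<noteq> \<zero>\<^bsub>?E\<^esub>" using a b by auto
    have ai: "inj_on a (carrier M)" using lin_map_inj_iff[OF self_lm self_lm CM End_lin[OF ac(1)] subset_refl] endinj[OF ac] by blast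
    have bi: "inj_on b (carrier M)" using lin_map_inj_iff[OF self_lm self_lm CM End_lin[OF bc(1)] subset_refl] endinj[OF bc] by blast
    have Anz: "nonzero_submodule R M (a ` carrier M)" unfolding nonzero_submodule_def
      using image_submodule[OF self_lm self_lm CM End_lin[OF ac(1)] subset_refl] endinj[OF ac m] m by auto
    have Bnz: "nonzero_submodule R M (b ` carrier M)" unfolding nonzero_submodule_def
      using image_submodule[OF self_lm self_lm CM End_lin[OF bc(1)] subset_refl] endinj[OF bc m] m by auto
    have Cs: "submodule (a ` carrier M \<inter> b ` carrier M) R M"
      by (rule submodule_Int[OF image_submodule[OF self_lm self_lm CM End_lin[OF ac(1)] subset_refl]
            image_submodule[OF self_lm self_lm CM End_lin[OF bc(1)] subset_refl]])
    obtain c where "c \<in> a ` carrier M \<inter> b ` carrier M" "c \<noteq> \<zero>\<^bsub>M\<^esub>" using mono_uniform[OF mono Anz Bnz] by blast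
    then have Cnz: "nonzero_submodule R M (a ` carrier M \<inter> b ` carrier M)"
      unfolding nonzero_submodule_def using Cs submoduleE(2)[OF Cs] by blast
    obtain u where ul: "u \<in> lin_map R M (carrier M) M (a ` carrier M \<inter> b ` carrier M)" and ui: "inj_on u (carrier M)"
      using comp Cnz unfolding compressible_def embeds_def by blast
    have ul': "u \<in> lin_map R M (carrier M) M (carrier M)"
    proof (rule lin_map_mono[OF ul subset_refl])
      fix x assume x: "x \<in> carrier M"
      have "u x \<in> a ` carrier M \<inter> b ` carrier M" by (rule lin_mapD(1)[OF ul x])
      then show "u x \<in> carrier M" by (rule subsetD[OF submoduleE(1)[OF Cs]])
    qed
    have u0: "u m \<noteq> \<zero>\<^bsub>M\<^esub>"
      using lin_map_inj_iff[OF self_lm self_lm CM ul' subset_refl] ui m by blast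
    define s where "s = (\<lambda>x\<in>carrier M. inv_into (carrier M) a (u x))"
    define t where "t = (\<lambda>x\<in>carrier M. inv_into (carrier M) b (u x))"
    have rana: "\<And>x. x \<in> carrier M \<Longrightarrow> u x \<in> a ` carrier M" using lin_mapD(1)[OF ul] by blast
    have ranb: "\<And>x. x \<in> carrier M \<Longrightarrow> u x \<in> b ` carrier M" using lin_mapD(1)[OF ul] by blast
    have s1: "s \<in> carrier ?E"
      unfolding s_def by (rule inv_endo(1)[OF End_lin[OF ac(1)] ai ul' rana])
    have s2: "a (s x) = u x" if "x \<in> carrier M" for x
      unfolding s_def by (rule inv_endo(2)[OF End_lin[OF ac(1)] ai ul' rana that])
    note s = s1 s2
    have t1: "t \<in> carrier ?E"
      unfolding t_def by (rule inv_endo(1)[OF End_lin[OF bc(1)] bi ul' ranb])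
    have t2: "b (t x) = u x" if "x \<in> carrier M" for x
      unfolding t_def by (rule inv_endo(2)[OF End_lin[OF bc(1)] bi ul' ranb that])
    note t = t1 t2
    have e: "s \<otimes>\<^bsub>?E\<^esub> a = t \<otimes>\<^bsub>?E\<^esub> b"
      by (rule End_eqI) (use s t ac bc in \<open>auto simp: End_mult_closed End_apply_mult\<close>)
    have "s \<otimes>\<^bsub>?E\<^esub> a \<noteq> \<zero>\<^bsub>?E\<^esub>"
      using End_nonzero_iff[OF End_mult_closed[OF s(1) ac(1)]] End_apply_mult s(2) u0 m by auto
    then show ?thesis using e s(1) t(1) by blast
  qed
  have "left_ore_domain ?E" unfolding left_ore_domain_def
  proof (intro conjI dom ballI)
    fix a b assume "a \<in> carrier ?E - {\<zero>\<^bsub>?E\<^esub>}" "b \<in> carrier ?E - {\<zero>\<^bsub>?E\<^esub>}"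
    then show "\<exists>s\<in>carrier ?E. \<exists>t\<in>carrier ?E. s \<otimes>\<^bsub>?E\<^esub> a = t \<otimes>\<^bsub>?E\<^esub> b \<and> s \<otimes>\<^bsub>?E\<^esub> a \<noteq> \<zero>\<^bsub>?E\<^esub>" by (rule ore)
  qed
  then show ?thesis using fr by blast
qed

lemma fr_imp_retractable:
  assumes fr: "fully_retractable R M"
  shows "retractable R M"
  unfolding retractable_def
proof (intro allI impI)
  fix N assume N: "nonzero_submodule R M N"
  have Ns: "submodule N R M" using N by (simp add: nonzero_submodule_def)
  have il: "(\<lambda>x. x) \<in> lin_map R M N M (carrier M)" by (rule lin_mapI) (use submoduleE(1)[OF Ns] in auto)
  have "\<exists>y\<in>N. y \<noteq> \<zero>\<^bsub>M\<^esub>" using N submoduleE(2)[OF Ns] unfolding nonzero_submodule_def by blast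
  then show "\<exists>f\<in>lin_map R M (carrier M) M N. \<exists>x\<in>carrier M. f x \<noteq> \<zero>\<^bsub>M\<^esub>"
    using fr N il unfolding fully_retractable_def by blast
qed

lemma ore_nonzero_module:
  assumes "left_ore_domain (End_ring R M)"
  shows "nonzero_module M"
proof -
  have "\<one>\<^bsub>End_ring R M\<^esub> \<noteq> \<zero>\<^bsub>End_ring R M\<^esub>" using assms by (simp add: left_ore_domain_def nc_domain_def)
  then obtain x where "x \<in> carrier M" "x \<noteq> \<zero>\<^bsub>M\<^esub>" using End_nonzero_iff[OF End_one_closed] End_apply_one by auto
  then show ?thesis unfolding nonzero_module_def by auto
qed

lemma retr_mono_imp_comp:
  assumes r: "retractable R M" and mono: "monoform R M"
  shows "compressible R M"
  unfolding compressible_def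
proof (intro conjI allI impI)
  show "nonzero_module M" using mono by (simp add: monoform_def)
  fix N assume N: "nonzero_submodule R M N"
  obtain h x where hl: "h \<in> lin_map R M (carrier M) M N" and x: "x \<in> carrier M" "h x \<noteq> \<zero>\<^bsub>M\<^esub>"
    using r N unfolding retractable_def by blast
  have Ns: "submodule N R M" using N by (simp add: nonzero_submodule_def)
  have hl': "h \<in> lin_map R M (carrier M) M (carrier M)" using lin_map_mono[OF hl subset_refl] submoduleE(1)[OF Ns] lin_mapD(1)[OF hl] by blast
  have "inj_on h (carrier M)" using mono submodule_carrier hl' x unfolding monoform_def by blast
  then show "embeds R M (carrier M) M N" unfolding embeds_def using hl by blast
qed

lemma fr_ore_imp_cm:
  assumes fr: "fully_retractable R M" and ore: "left_ore_domain (End_ring R M)"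
  shows "compressible R M \<and> monoform R M"
proof -
  let ?E = "End_ring R M"
  interpret ER: ring ?E by (rule End_ring_is_ring)
  have r: "retractable R M" by (rule fr_imp_retractable[OF fr])
  have nzM: "nonzero_module M" by (rule ore_nonzero_module[OF ore])
  have dom: "nc_domain ?E" using ore by (simp add: left_ore_domain_def)
  have mono: "monoform R M" unfolding monoform_def
  proof (intro conjI nzM allI impI)
    fix N f assume Ns: "submodule N R M" and fl: "f \<in> lin_map R M N M (carrier M)"
      and ex: "\<exists>x\<in>N. f x \<noteq> \<zero>\<^bsub>M\<^esub>"
    note S = submoduleE[OF Ns]
    have f0: "f \<zero>\<^bsub>M\<^esub> = \<zero>\<^bsub>M\<^esub>" by (rule lin_map_zero[OF self_lm self_lm Ns fl subset_refl])
    have N: "nonzero_submodule R M N" unfolding nonzero_submodule_def using Ns ex f0 by auto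
    show "inj_on f N"
    proof (rule ccontr)
      assume ni: "\<not> inj_on f N"
      define K where "K = {x\<in>N. f x = \<zero>\<^bsub>M\<^esub>}"
      have Ks: "submodule K R M" unfolding K_def by (rule kernel_submodule[OF self_lm self_lm Ns fl subset_refl])
      obtain k where k: "k \<in> N" "f k = \<zero>\<^bsub>M\<^esub>" "k \<noteq> \<zero>\<^bsub>M\<^esub>"
        using ni lin_map_inj_iff[OF self_lm self_lm Ns fl subset_refl] by auto
      have Knz: "nonzero_submodule R M K" unfolding nonzero_submodule_def using Ks k K_def by auto
      obtain h x0 where hl: "h \<in> lin_map R M (carrier M) M N" and x0: "x0 \<in> carrier M" "f (h x0) \<noteq> \<zero>\<^bsub>M\<^esub>"
        using fr N fl ex unfolding fully_retractable_def by blast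
      obtain k' x1 where kl: "k' \<in> lin_map R M (carrier M) M K" and x1: "x1 \<in> carrier M" "k' x1 \<noteq> \<zero>\<^bsub>M\<^esub>"
        using r Knz unfolding retractable_def by blast
      have KM: "K \<subseteq> carrier M" using submoduleE(1)[OF Ks] .
      have hl': "h \<in> lin_map R M (carrier M) M (carrier M)" using lin_map_mono[OF hl subset_refl] S(1) lin_mapD(1)[OF hl] by blast
      have kl': "k' \<in> lin_map R M (carrier M) M (carrier M)" using lin_map_mono[OF kl subset_refl] KM lin_mapD(1)[OF kl] by blast
      have fhl: "(\<lambda>x. f (h x)) \<in> lin_map R M (carrier M) M (carrier M)" by (rule lin_map_comp[OF hl fl])
      define F where "F = restrict (\<lambda>x. f (h x)) (carrier M)"
      define H where "H = restrict h (carrier M)"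
      define Kk where "Kk = restrict k' (carrier M)"
      have FE: "F \<in> carrier ?E" unfolding F_def by (rule End_memI[OF fhl])
      have HE: "H \<in> carrier ?E" unfolding H_def by (rule End_memI[OF hl'])
      have KE: "Kk \<in> carrier ?E" unfolding Kk_def by (rule End_memI[OF kl'])
      have F0: "F \<noteq> \<zero>\<^bsub>?E\<^esub>" using End_nonzero_iff[OF FE] x0 unfolding F_def by auto
      have H0: "H \<noteq> \<zero>\<^bsub>?E\<^esub>" using End_nonzero_iff[OF HE] x0 f0 unfolding H_def by auto
      have K0: "Kk \<noteq> \<zero>\<^bsub>?E\<^esub>" using End_nonzero_iff[OF KE] x1 unfolding Kk_def by auto
      obtain s t where st: "s \<in> carrier ?E" "t \<in> carrier ?E" "s \<otimes>\<^bsub>?E\<^esub> Kk = t \<otimes>\<^bsub>?E\<^esub> H" "s \<otimes>\<^bsub>?E\<^esub> Kk \<noteq> \<zero>\<^bsub>?E\<^esub>"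
        using ore KE K0 HE H0 unfolding left_ore_domain_def by blast
      have eq: "k' (s x) = h (t x)" if "x \<in> carrier M" for x
      proof -
        have "(s \<otimes>\<^bsub>?E\<^esub> Kk) x = (t \<otimes>\<^bsub>?E\<^esub> H) x" using st(3) by simp
        then show ?thesis using End_apply_mult[OF that] End_closed[OF st(1) that] End_closed[OF st(2) that]
          unfolding Kk_def H_def by simp
      qed
      have "t \<otimes>\<^bsub>?E\<^esub> F = \<zero>\<^bsub>?E\<^esub>"
      proof (rule End_eqI)
        show "t \<otimes>\<^bsub>?E\<^esub> F \<in> carrier ?E" by (rule End_mult_closed[OF st(2) FE])
        show "\<zero>\<^bsub>?E\<^esub> \<in> carrier ?E" by (rule End_zero_closed)
        fix x assume x: "x \<in> carrier M"
        have tx: "t x \<in> carrier M" using End_closed[OF st(2) x] .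
        have "(t \<otimes>\<^bsub>?E\<^esub> F) x = f (h (t x))" using End_apply_mult[OF x] tx unfolding F_def by simp
        also have "\<dots> = f (k' (s x))" using eq[OF x] by simp
        also have "\<dots> = \<zero>\<^bsub>M\<^esub>" using lin_mapD(1)[OF kl End_closed[OF st(1) x]] K_def by auto
        finally show "(t \<otimes>\<^bsub>?E\<^esub> F) x = \<zero>\<^bsub>?E\<^esub> x" using End_apply_zero[OF x] by simp
      qed
      then have "t = \<zero>\<^bsub>?E\<^esub>" using dom st(2) FE F0 unfolding nc_domain_def by blast
      then have "t \<otimes>\<^bsub>?E\<^esub> H = \<zero>\<^bsub>?E\<^esub>" using ER.l_null[OF HE] by simp
      then show False using st(3,4) by simp
    qed
  qed
  show ?thesis using retr_mono_imp_comp[OF r mono] mono by blast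
qed

lemma part_b_c: "compressible R M \<and> monoform R M \<longleftrightarrow> fully_retractable R M \<and> left_ore_domain (End_ring R M)"
  using cm_imp_fr_ore fr_ore_imp_cm by blast

end



lemma reg_carrier[simp]: "carrier (regular_module R) = carrier R"
  and reg_add[simp]: "add (regular_module R) = add R"
  and reg_zero[simp]: "zero (regular_module R) = zero R"
  and reg_smult[simp]: "smult (regular_module R) = mult R"
  by (simp_all add: regular_module_def)

lemma reg_a_inv[simp]: "a_inv (regular_module R) = a_inv R"
  by (simp add: a_inv_def m_inv_def regular_module_def fun_eq_iff)

lemma reg_lm: "ring R \<Longrightarrow> left_module R (regular_module R)"
proof -
  assume r: "ring R"
  interpret R: ring R by (rule r)
  have ag: "abelian_group (regular_module R)"
  proof (rule abelian_groupI)
    fix x y z assume "x \<in> carrier (regular_module R)" "y \<in> carrier (regular_module R)" "z \<in> carrier (regular_module R)"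
    then show "x \<oplus>\<^bsub>regular_module R\<^esub> y \<oplus>\<^bsub>regular_module R\<^esub> z = x \<oplus>\<^bsub>regular_module R\<^esub> (y \<oplus>\<^bsub>regular_module R\<^esub> z)"
      by (simp add: R.a_assoc)
  next
    fix x y assume "x \<in> carrier (regular_module R)" "y \<in> carrier (regular_module R)"
    then show "x \<oplus>\<^bsub>regular_module R\<^esub> y = y \<oplus>\<^bsub>regular_module R\<^esub> x" by (simp add: R.a_comm)
  next
    fix x assume x: "x \<in> carrier (regular_module R)"
    then show "\<exists>y\<in>carrier (regular_module R). y \<oplus>\<^bsub>regular_module R\<^esub> x = \<zero>\<^bsub>regular_module R\<^esub>"
      by (intro bexI[of _ "\<ominus>\<^bsub>R\<^esub> x"]) (simp_all add: R.l_neg)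
  qed auto
  show ?thesis
    by (intro left_module.intro r ag left_module_axioms.intro)
      (auto simp: R.l_distr R.r_distr R.m_assoc)
qed

context left_module begin

lemma ag_swap:
  assumes "a \<in> carrier M" "b \<in> carrier M" "c \<in> carrier M" "d \<in> carrier M"
  shows "a \<oplus>\<^bsub>M\<^esub> b = c \<oplus>\<^bsub>M\<^esub> d \<longleftrightarrow> b \<ominus>\<^bsub>M\<^esub> d = c \<ominus>\<^bsub>M\<^esub> a"
proof -
  have "(a \<oplus>\<^bsub>M\<^esub> b) \<ominus>\<^bsub>M\<^esub> (c \<oplus>\<^bsub>M\<^esub> d) = (b \<ominus>\<^bsub>M\<^esub> d) \<ominus>\<^bsub>M\<^esub> (c \<ominus>\<^bsub>M\<^esub> a)"
    using assms by (simp add: M.minus_eq M.minus_add M.minus_minus M.a_ac)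
  moreover have "a \<oplus>\<^bsub>M\<^esub> b \<in> carrier M" "c \<oplus>\<^bsub>M\<^esub> d \<in> carrier M" "b \<ominus>\<^bsub>M\<^esub> d \<in> carrier M" "c \<ominus>\<^bsub>M\<^esub> a \<in> carrier M"
    using assms by (simp_all add: M.minus_eq)
  ultimately show ?thesis using minus_zero_iff[of "a \<oplus>\<^bsub>M\<^esub> b" "c \<oplus>\<^bsub>M\<^esub> d"] minus_zero_iff[of "b \<ominus>\<^bsub>M\<^esub> d" "c \<ominus>\<^bsub>M\<^esub> a"]
    by simp
qed

end

definition gr :: "'a set \<Rightarrow> ('a \<Rightarrow> 'b) \<Rightarrow> ('a \<times> 'b) set" where
  "gr D h = (\<lambda>x. (x, h x)) ` D"

lemma gr_mem[simp]: "(x, y) \<in> gr D h \<longleftrightarrow> x \<in> D \<and> y = h x"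
  by (auto simp: gr_def)

lemma gr_sub: "gr D h \<subseteq> gr D' h' \<longleftrightarrow> D \<subseteq> D' \<and> (\<forall>x\<in>D. h' x = h x)"
  by (auto simp: gr_def)

lemma gr_fst: "fst ` gr D h = D"
  by (auto simp: gr_def image_image)

lemma gr_eq_dom: "gr D h = gr D' h' \<Longrightarrow> D = D'"
  by (metis gr_fst)


definition pext :: "('r, 'c) ring_scheme \<Rightarrow> ('r, 'a, 'd) module_scheme \<Rightarrow> 'a set \<Rightarrow> ('a \<Rightarrow> 'a) \<Rightarrow> 'a set \<Rightarrow> ('a \<Rightarrow> 'a) \<Rightarrow> bool" where
  "pext R M A f D h \<longleftrightarrow> submodule D R M \<and> A \<subseteq> D \<and> h \<in> lin_map R M D M (carrier M) \<and> (\<forall>x\<in>A. h x = f x)"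

context left_module begin

lemma chain_ub:
  assumes C1: "C \<subseteq> {gr D h | D h. pext R M A f D h}" and C2: "chain\<^sub>\<subseteq> C" and C3: "C \<noteq> {}"
  shows "\<Union>C \<in> {gr D h | D h. pext R M A f D h}"
proof -
  have "\<forall>G\<in>C. \<exists>p. pext R M A f (fst p) (snd p) \<and> G = gr (fst p) (snd p)" using C1 by fastforce
  from bchoice[OF this] obtain pf where pf: "\<forall>G\<in>C. pext R M A f (fst (pf G)) (snd (pf G)) \<and> G = gr (fst (pf G)) (snd (pf G))"
    by blast
  define Dof where "Dof G = fst (pf G)" for G
  define hof where "hof G = snd (pf G)" for G
  have P: "pext R M A f (Dof G) (hof G)" if "G \<in> C" for G
    using pf that unfolding Dof_def hof_def by blast
  have Geq: "G = gr (Dof G) (hof G)" if "G \<in> C" for G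
    using pf that unfolding Dof_def hof_def by blast
  have memG: "(x, y) \<in> G \<longleftrightarrow> x \<in> Dof G \<and> y = hof G x" if "G \<in> C" for G x y
  proof -
    from Geq[OF that] have "((x, y) \<in> G) = ((x, y) \<in> gr (Dof G) (hof G))" by (rule arg_cong[where f="\<lambda>S. (x, y) \<in> S"])
    then show ?thesis by simp
  qed
  have Ps: "submodule (Dof G) R M" "A \<subseteq> Dof G" "hof G \<in> lin_map R M (Dof G) M (carrier M)" "\<forall>x\<in>A. hof G x = f x"
    if "G \<in> C" for G using P[OF that] unfolding pext_def by auto
  have mono: "Dof G1 \<subseteq> Dof G2 \<and> (\<forall>x\<in>Dof G1. hof G2 x = hof G1 x)" if "G1 \<in> C" "G2 \<in> C" "G1 \<subseteq> G2" for G1 G2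
  proof -
    have "gr (Dof G1) (hof G1) \<subseteq> gr (Dof G2) (hof G2)"
      unfolding Geq[OF that(1), symmetric] Geq[OF that(2), symmetric] by (rule that(3))
    then show ?thesis by (simp add: gr_sub)
  qed
  define U where "U = \<Union>C"
  define D where "D = (\<Union>G\<in>C. Dof G)"
  define h where "h x = (SOME y. (x, y) \<in> U)" for x
  have two: "\<exists>G\<in>C. x1 \<in> Dof G \<and> x2 \<in> Dof G" if x12: "x1 \<in> D" "x2 \<in> D" for x1 x2
  proof -
    obtain G1 G2 where G: "G1 \<in> C" "G2 \<in> C" "x1 \<in> Dof G1" "x2 \<in> Dof G2" using x12 D_def by auto
    have "G1 \<subseteq> G2 \<or> G2 \<subseteq> G1" using C2 G unfolding chain_subset_def by blast
    then show ?thesis using mono G by blast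
  qed
  have func: "y = y'" if xy: "(x, y) \<in> U" "(x, y') \<in> U" for x y y'
  proof -
    obtain G1 G2 where G: "G1 \<in> C" "G2 \<in> C" "(x, y) \<in> G1" "(x, y') \<in> G2" using xy U_def by auto
    have "G1 \<subseteq> G2 \<or> G2 \<subseteq> G1" using C2 G unfolding chain_subset_def by blast
    then show ?thesis
    proof
      assume "G1 \<subseteq> G2" then have "(x, y) \<in> G2" "(x, y') \<in> G2" using G by auto
      then show ?thesis using memG[OF G(2)] by simp
    next
      assume "G2 \<subseteq> G1" then have "(x, y) \<in> G1" "(x, y') \<in> G1" using G by auto
      then show ?thesis using memG[OF G(1)] by simp
    qed
  qed
  have hval: "h x = hof G x" if "G \<in> C" "x \<in> Dof G" for G x
  proof -
    have "(x, hof G x) \<in> G" using memG[OF that(1)] that(2) by simp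
    then have m: "(x, hof G x) \<in> U" using that(1) U_def by blast
    then have "(x, h x) \<in> U" unfolding h_def by (rule someI)
    then show ?thesis using func m by blast
  qed
  obtain G0 where G0: "G0 \<in> C" using C3 by blast
  have Dsub: "submodule D R M"
  proof (rule submoduleI')
    show "D \<subseteq> carrier M" unfolding D_def using Ps(1) submoduleE(1) by blast
    show "\<zero>\<^bsub>M\<^esub> \<in> D" unfolding D_def using G0 Ps(1)[OF G0] submoduleE(2) by blast
    show "x \<oplus>\<^bsub>M\<^esub> y \<in> D" if "x \<in> D" "y \<in> D" for x y
      using two[OF that] Ps(1) submoduleE(3) unfolding D_def by blast
    show "\<ominus>\<^bsub>M\<^esub> x \<in> D" if "x \<in> D" for x
      using that Ps(1) submoduleE(4) unfolding D_def by blast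
    show "a \<odot>\<^bsub>M\<^esub> x \<in> D" if "a \<in> carrier R" "x \<in> D" for a x
      using that Ps(1) submoduleE(5) unfolding D_def by blast
  qed
  have AD: "A \<subseteq> D" unfolding D_def using G0 Ps(2)[OF G0] by blast
  have hl: "h \<in> lin_map R M D M (carrier M)"
  proof (rule lin_mapI)
    show "h x \<in> carrier M" if xD: "x \<in> D" for x
    proof -
      obtain G where "G \<in> C" "x \<in> Dof G" using xD D_def by auto
      then show ?thesis using hval lin_mapD(1)[OF Ps(3)] by metis
    qed
    show "h (x \<oplus>\<^bsub>M\<^esub> y) = h x \<oplus>\<^bsub>M\<^esub> h y" if xyD: "x \<in> D" "y \<in> D" for x y
    proof -
      obtain G where G: "G \<in> C" "x \<in> Dof G" "y \<in> Dof G" using two[OF xyD] by blast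
      have "x \<oplus>\<^bsub>M\<^esub> y \<in> Dof G" using submoduleE(3)[OF Ps(1)[OF G(1)] G(2,3)] .
      then show ?thesis using hval G lin_mapD(2)[OF Ps(3)[OF G(1)] G(2,3)] by metis
    qed
    show "h (a \<odot>\<^bsub>M\<^esub> x) = a \<odot>\<^bsub>M\<^esub> h x" if that: "a \<in> carrier R" and xD: "x \<in> D" for a x
    proof -
      obtain G where G: "G \<in> C" "x \<in> Dof G" using xD D_def by auto
      have "a \<odot>\<^bsub>M\<^esub> x \<in> Dof G" using submoduleE(5)[OF Ps(1)[OF G(1)] that(1) G(2)] .
      then show ?thesis using hval G lin_mapD(3)[OF Ps(3)[OF G(1)] that(1) G(2)] by metis
    qed
  qed
  have hf: "\<forall>x\<in>A. h x = f x" using hval[OF G0] Ps(2,4)[OF G0] by auto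
  have Ueq: "U = gr D h"
  proof (intro equalityI subsetI)
    fix p assume "p \<in> U"
    then obtain G where G: "G \<in> C" "p \<in> G" using U_def by auto
    obtain x y where p: "p = (x, y)" by (cases p)
    have "x \<in> Dof G" "y = hof G x" using G(2) memG[OF G(1)] p by auto
    then show "p \<in> gr D h" using p hval[OF G(1)] G(1) D_def by auto
  next
    fix p assume "p \<in> gr D h"
    then obtain x where x: "x \<in> D" "p = (x, h x)" by (auto simp: gr_def)
    then obtain G where G: "G \<in> C" "x \<in> Dof G" using D_def by auto
    have "(x, hof G x) \<in> G" using memG[OF G(1)] G(2) by simp
    then show "p \<in> U" using x hval[OF G] G(1) U_def by auto
  qed
  have "pext R M A f D h" unfolding pext_def using Dsub AD hl hf by blast
  then show ?thesis using Ueq U_def by blast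
qed

end


context left_module begin

lemma add_id: "d1 \<in> carrier M \<Longrightarrow> d2 \<in> carrier M \<Longrightarrow> r1 \<in> carrier R \<Longrightarrow> r2 \<in> carrier R \<Longrightarrow> b \<in> carrier M \<Longrightarrow>
  (d1 \<oplus>\<^bsub>M\<^esub> r1 \<odot>\<^bsub>M\<^esub> b) \<oplus>\<^bsub>M\<^esub> (d2 \<oplus>\<^bsub>M\<^esub> r2 \<odot>\<^bsub>M\<^esub> b) = (d1 \<oplus>\<^bsub>M\<^esub> d2) \<oplus>\<^bsub>M\<^esub> (r1 \<oplus>\<^bsub>R\<^esub> r2) \<odot>\<^bsub>M\<^esub> b"
  by (simp add: smult_l_distr smult_closed M.a_ac)

lemma neg_id: "d \<in> carrier M \<Longrightarrow> r \<in> carrier R \<Longrightarrow> b \<in> carrier M \<Longrightarrow>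
  \<ominus>\<^bsub>M\<^esub> (d \<oplus>\<^bsub>M\<^esub> r \<odot>\<^bsub>M\<^esub> b) = (\<ominus>\<^bsub>M\<^esub> d) \<oplus>\<^bsub>M\<^esub> (\<ominus>\<^bsub>R\<^esub> r) \<odot>\<^bsub>M\<^esub> b"
  by (simp add: smult_minus smult_closed M.minus_add)

lemma sm_id: "d \<in> carrier M \<Longrightarrow> r \<in> carrier R \<Longrightarrow> b \<in> carrier M \<Longrightarrow> a \<in> carrier R \<Longrightarrow>
  a \<odot>\<^bsub>M\<^esub> (d \<oplus>\<^bsub>M\<^esub> r \<odot>\<^bsub>M\<^esub> b) = a \<odot>\<^bsub>M\<^esub> d \<oplus>\<^bsub>M\<^esub> (a \<otimes>\<^bsub>R\<^esub> r) \<odot>\<^bsub>M\<^esub> b"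
  by (simp add: smult_r_distr smult_assoc1 smult_closed)

lemma diff_smult: "r \<in> carrier R \<Longrightarrow> r' \<in> carrier R \<Longrightarrow> b \<in> carrier M \<Longrightarrow>
  (r \<ominus>\<^bsub>R\<^esub> r') \<odot>\<^bsub>M\<^esub> b = r \<odot>\<^bsub>M\<^esub> b \<ominus>\<^bsub>M\<^esub> r' \<odot>\<^bsub>M\<^esub> b"
  by (simp add: R.minus_eq M.minus_eq smult_l_distr smult_minus)

lemma ext_step:
  assumes inj: "injective_module R M" and P: "pext R M A f D h" and b: "b \<in> carrier M" "b \<notin> D"
  shows "\<exists>D' h'. pext R M A f D' h' \<and> gr D h \<subseteq> gr D' h' \<and> b \<in> D'"
proof -
  have Ds: "submodule D R M" and AD: "A \<subseteq> D" and hl: "h \<in> lin_map R M D M (carrier M)" and hf: "\<forall>x\<in>A. h x = f x"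
    using P unfolding pext_def by auto
  note SD = submoduleE[OF Ds]
  have DM: "\<And>x. x \<in> D \<Longrightarrow> x \<in> carrier M" using SD(1) by blast
  have hM: "\<And>x. x \<in> D \<Longrightarrow> h x \<in> carrier M" using lin_mapD(1)[OF hl] by blast
  have RM: "left_module R (regular_module R)" by (rule reg_lm[OF R.ring_axioms])
  define I where "I = {r \<in> carrier R. r \<odot>\<^bsub>M\<^esub> b \<in> D}"
  have Is: "submodule I R (regular_module R)"
  proof (rule left_module.submoduleI'[OF RM])
    show "I \<subseteq> carrier (regular_module R)" unfolding I_def by auto
    show "\<zero>\<^bsub>regular_module R\<^esub> \<in> I" unfolding I_def using zero_smult[OF b(1)] SD(2) by simp
    show "x \<oplus>\<^bsub>regular_module R\<^esub> y \<in> I" if "x \<in> I" "y \<in> I" for x y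
      using that SD(3) b(1) unfolding I_def by (simp add: smult_l_distr)
    show "\<ominus>\<^bsub>regular_module R\<^esub> x \<in> I" if "x \<in> I" for x
      using that SD(4) b(1) unfolding I_def by (simp add: smult_minus)
    show "a \<odot>\<^bsub>regular_module R\<^esub> x \<in> I" if "a \<in> carrier R" "x \<in> I" for a x
      using that SD(5) b(1) unfolding I_def by (simp add: smult_assoc1)
  qed
  define g where "g r = h (r \<odot>\<^bsub>M\<^esub> b)" for r
  have gl: "g \<in> lin_map R (regular_module R) I M (carrier M)"
  proof (rule lin_mapI)
    show "g x \<in> carrier M" if "x \<in> I" for x using that hM unfolding I_def g_def by auto
    show "g (x \<oplus>\<^bsub>regular_module R\<^esub> y) = g x \<oplus>\<^bsub>M\<^esub> g y" if "x \<in> I" "y \<in> I" for x y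
      using that lin_mapD(2)[OF hl] b(1) unfolding I_def g_def by (simp add: smult_l_distr)
    show "g (a \<odot>\<^bsub>regular_module R\<^esub> x) = a \<odot>\<^bsub>M\<^esub> g x" if "a \<in> carrier R" "x \<in> I" for a x
      using that lin_mapD(3)[OF hl] b(1) unfolding I_def g_def by (simp add: smult_assoc1)
  qed
  obtain e where e: "e \<in> carrier M" "\<forall>r\<in>I. g r = r \<odot>\<^bsub>M\<^esub> e"
    using inj Is gl unfolding injective_module_def by blast
  have uniq: "h d \<oplus>\<^bsub>M\<^esub> r \<odot>\<^bsub>M\<^esub> e = h d' \<oplus>\<^bsub>M\<^esub> r' \<odot>\<^bsub>M\<^esub> e"
    if d: "d \<in> D" "d' \<in> D" and r: "r \<in> carrier R" "r' \<in> carrier R"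
      and eq: "d \<oplus>\<^bsub>M\<^esub> r \<odot>\<^bsub>M\<^esub> b = d' \<oplus>\<^bsub>M\<^esub> r' \<odot>\<^bsub>M\<^esub> b" for d d' r r'
  proof -
    have c: "d \<in> carrier M" "d' \<in> carrier M" "r \<odot>\<^bsub>M\<^esub> b \<in> carrier M" "r' \<odot>\<^bsub>M\<^esub> b \<in> carrier M"
      using DM d r b smult_closed by auto
    have "r \<odot>\<^bsub>M\<^esub> b \<ominus>\<^bsub>M\<^esub> r' \<odot>\<^bsub>M\<^esub> b = d' \<ominus>\<^bsub>M\<^esub> d" using ag_swap[OF c(1,3,2,4)] eq by simp
    then have rb: "(r \<ominus>\<^bsub>R\<^esub> r') \<odot>\<^bsub>M\<^esub> b = d' \<ominus>\<^bsub>M\<^esub> d" using diff_smult r b by simp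
    have dd: "d' \<ominus>\<^bsub>M\<^esub> d \<in> D" using SD d by (simp add: M.minus_eq)
    have rr: "r \<ominus>\<^bsub>R\<^esub> r' \<in> carrier R" using r by simp
    then have "r \<ominus>\<^bsub>R\<^esub> r' \<in> I" unfolding I_def using rb dd by simp
    then have "g (r \<ominus>\<^bsub>R\<^esub> r') = (r \<ominus>\<^bsub>R\<^esub> r') \<odot>\<^bsub>M\<^esub> e" using e by blast
    moreover have "g (r \<ominus>\<^bsub>R\<^esub> r') = h d' \<ominus>\<^bsub>M\<^esub> h d"
      unfolding g_def rb using lin_map_diff[OF self_lm self_lm Ds hl subset_refl d(2) d(1)] .
    ultimately have "r \<odot>\<^bsub>M\<^esub> e \<ominus>\<^bsub>M\<^esub> r' \<odot>\<^bsub>M\<^esub> e = h d' \<ominus>\<^bsub>M\<^esub> h d" using diff_smult r e(1) by simp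
    then show ?thesis using ag_swap[of "h d" "r \<odot>\<^bsub>M\<^esub> e" "h d'" "r' \<odot>\<^bsub>M\<^esub> e"] hM d r e(1) smult_closed by simp
  qed
  define D' where "D' = {d \<oplus>\<^bsub>M\<^esub> r \<odot>\<^bsub>M\<^esub> b | d r. d \<in> D \<and> r \<in> carrier R}"
  define h' where "h' z = (SOME v. \<exists>d r. d \<in> D \<and> r \<in> carrier R \<and> z = d \<oplus>\<^bsub>M\<^esub> r \<odot>\<^bsub>M\<^esub> b \<and> v = h d \<oplus>\<^bsub>M\<^esub> r \<odot>\<^bsub>M\<^esub> e)" for z
  have h'val: "h' (d \<oplus>\<^bsub>M\<^esub> r \<odot>\<^bsub>M\<^esub> b) = h d \<oplus>\<^bsub>M\<^esub> r \<odot>\<^bsub>M\<^esub> e" if "d \<in> D" "r \<in> carrier R" for d r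
  proof -
    have "\<exists>v. \<exists>d' r'. d' \<in> D \<and> r' \<in> carrier R \<and> d \<oplus>\<^bsub>M\<^esub> r \<odot>\<^bsub>M\<^esub> b = d' \<oplus>\<^bsub>M\<^esub> r' \<odot>\<^bsub>M\<^esub> b \<and> v = h d' \<oplus>\<^bsub>M\<^esub> r' \<odot>\<^bsub>M\<^esub> e"
      using that by blast
    then have "\<exists>d' r'. d' \<in> D \<and> r' \<in> carrier R \<and> d \<oplus>\<^bsub>M\<^esub> r \<odot>\<^bsub>M\<^esub> b = d' \<oplus>\<^bsub>M\<^esub> r' \<odot>\<^bsub>M\<^esub> b \<and> h' (d \<oplus>\<^bsub>M\<^esub> r \<odot>\<^bsub>M\<^esub> b) = h d' \<oplus>\<^bsub>M\<^esub> r' \<odot>\<^bsub>M\<^esub> e"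
      unfolding h'_def by (rule someI_ex)
    then obtain d' r' where dr: "d' \<in> D" "r' \<in> carrier R" "d \<oplus>\<^bsub>M\<^esub> r \<odot>\<^bsub>M\<^esub> b = d' \<oplus>\<^bsub>M\<^esub> r' \<odot>\<^bsub>M\<^esub> b"
      "h' (d \<oplus>\<^bsub>M\<^esub> r \<odot>\<^bsub>M\<^esub> b) = h d' \<oplus>\<^bsub>M\<^esub> r' \<odot>\<^bsub>M\<^esub> e" by blast
    then show ?thesis using uniq[OF that(1) dr(1) that(2) dr(2) dr(3)] by simp
  qed
  have D'E: "\<exists>d r. z = d \<oplus>\<^bsub>M\<^esub> r \<odot>\<^bsub>M\<^esub> b \<and> d \<in> D \<and> r \<in> carrier R" if "z \<in> D'" for z
    using that unfolding D'_def by blast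
  have D'I: "d \<oplus>\<^bsub>M\<^esub> r \<odot>\<^bsub>M\<^esub> b \<in> D'" if "d \<in> D" "r \<in> carrier R" for d r
    using that unfolding D'_def by blast
  have D'sub: "submodule D' R M"
  proof (rule submoduleI')
    show "D' \<subseteq> carrier M" using D'E DM b smult_closed by fastforce
    show "\<zero>\<^bsub>M\<^esub> \<in> D'" using D'I[OF SD(2) R.zero_closed] zero_smult[OF b(1)] by simp
    show "x \<oplus>\<^bsub>M\<^esub> y \<in> D'" if xy: "x \<in> D'" "y \<in> D'" for x y
    proof -
      obtain d1 r1 d2 r2 where "x = d1 \<oplus>\<^bsub>M\<^esub> r1 \<odot>\<^bsub>M\<^esub> b" "d1 \<in> D" "r1 \<in> carrier R"
        "y = d2 \<oplus>\<^bsub>M\<^esub> r2 \<odot>\<^bsub>M\<^esub> b" "d2 \<in> D" "r2 \<in> carrier R" using D'E xy by blast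
      then show ?thesis using add_id DM b D'I SD(3) by simp
    qed
    show "\<ominus>\<^bsub>M\<^esub> x \<in> D'" if xD: "x \<in> D'" for x
    proof -
      obtain d r where "x = d \<oplus>\<^bsub>M\<^esub> r \<odot>\<^bsub>M\<^esub> b" "d \<in> D" "r \<in> carrier R" using D'E xD by blast
      then show ?thesis using neg_id DM b D'I SD(4) by simp
    qed
    show "a \<odot>\<^bsub>M\<^esub> x \<in> D'" if a: "a \<in> carrier R" and xD: "x \<in> D'" for a x
    proof -
      obtain d r where "x = d \<oplus>\<^bsub>M\<^esub> r \<odot>\<^bsub>M\<^esub> b" "d \<in> D" "r \<in> carrier R" using D'E xD by blast
      then show ?thesis using sm_id DM b a D'I SD(5) by simp
    qed
  qed
  have h'l: "h' \<in> lin_map R M D' M (carrier M)"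
  proof (rule lin_mapI)
    show "h' x \<in> carrier M" if xD: "x \<in> D'" for x
    proof -
      obtain d r where "x = d \<oplus>\<^bsub>M\<^esub> r \<odot>\<^bsub>M\<^esub> b" "d \<in> D" "r \<in> carrier R" using D'E xD by blast
      then show ?thesis using h'val hM e(1) smult_closed by simp
    qed
    show "h' (x \<oplus>\<^bsub>M\<^esub> y) = h' x \<oplus>\<^bsub>M\<^esub> h' y" if xy: "x \<in> D'" "y \<in> D'" for x y
    proof -
      obtain d1 r1 d2 r2 where dr: "x = d1 \<oplus>\<^bsub>M\<^esub> r1 \<odot>\<^bsub>M\<^esub> b" "d1 \<in> D" "r1 \<in> carrier R"
        "y = d2 \<oplus>\<^bsub>M\<^esub> r2 \<odot>\<^bsub>M\<^esub> b" "d2 \<in> D" "r2 \<in> carrier R" using D'E xy by blast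
      have "h' (x \<oplus>\<^bsub>M\<^esub> y) = h' ((d1 \<oplus>\<^bsub>M\<^esub> d2) \<oplus>\<^bsub>M\<^esub> (r1 \<oplus>\<^bsub>R\<^esub> r2) \<odot>\<^bsub>M\<^esub> b)" using dr add_id DM b by simp
      also have "\<dots> = h (d1 \<oplus>\<^bsub>M\<^esub> d2) \<oplus>\<^bsub>M\<^esub> (r1 \<oplus>\<^bsub>R\<^esub> r2) \<odot>\<^bsub>M\<^esub> e" using h'val SD(3) dr by simp
      also have "\<dots> = (h d1 \<oplus>\<^bsub>M\<^esub> r1 \<odot>\<^bsub>M\<^esub> e) \<oplus>\<^bsub>M\<^esub> (h d2 \<oplus>\<^bsub>M\<^esub> r2 \<odot>\<^bsub>M\<^esub> e)"
        using add_id[of "h d1" "h d2" r1 r2 e] hM dr e(1) lin_mapD(2)[OF hl] by simp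
      also have "\<dots> = h' x \<oplus>\<^bsub>M\<^esub> h' y" using h'val dr by simp
      finally show ?thesis .
    qed
    show "h' (a \<odot>\<^bsub>M\<^esub> x) = a \<odot>\<^bsub>M\<^esub> h' x" if a: "a \<in> carrier R" and xD: "x \<in> D'" for a x
    proof -
      obtain d r where dr: "x = d \<oplus>\<^bsub>M\<^esub> r \<odot>\<^bsub>M\<^esub> b" "d \<in> D" "r \<in> carrier R" using D'E xD by blast
      have "h' (a \<odot>\<^bsub>M\<^esub> x) = h' (a \<odot>\<^bsub>M\<^esub> d \<oplus>\<^bsub>M\<^esub> (a \<otimes>\<^bsub>R\<^esub> r) \<odot>\<^bsub>M\<^esub> b)" using dr sm_id DM b a by simp
      also have "\<dots> = h (a \<odot>\<^bsub>M\<^esub> d) \<oplus>\<^bsub>M\<^esub> (a \<otimes>\<^bsub>R\<^esub> r) \<odot>\<^bsub>M\<^esub> e" using h'val SD(5) dr a by simp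
      also have "\<dots> = a \<odot>\<^bsub>M\<^esub> (h d \<oplus>\<^bsub>M\<^esub> r \<odot>\<^bsub>M\<^esub> e)"
        using sm_id[of "h d" r e a] hM dr e(1) a lin_mapD(3)[OF hl] by simp
      also have "\<dots> = a \<odot>\<^bsub>M\<^esub> h' x" using h'val dr by simp
      finally show ?thesis .
    qed
  qed
  have DD': "d \<in> D'" "h' d = h d" if "d \<in> D" for d
  proof -
    have "d = d \<oplus>\<^bsub>M\<^esub> \<zero>\<^bsub>R\<^esub> \<odot>\<^bsub>M\<^esub> b" using zero_smult[OF b(1)] DM[OF that] by simp
    then show "d \<in> D'" "h' d = h d" using D'I[OF that R.zero_closed] h'val[OF that R.zero_closed] zero_smult[OF e(1)] hM[OF that]
      by auto
  qed
  have bD': "b \<in> D'"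
  proof -
    have "b = \<zero>\<^bsub>M\<^esub> \<oplus>\<^bsub>M\<^esub> \<one>\<^bsub>R\<^esub> \<odot>\<^bsub>M\<^esub> b" using b(1) smult_one by simp
    then show ?thesis using D'I[OF SD(2) R.one_closed] by simp
  qed
  have "pext R M A f D' h'" unfolding pext_def using D'sub h'l AD DD' hf by auto
  moreover have "gr D h \<subseteq> gr D' h'" unfolding gr_sub using DD' by auto
  ultimately show ?thesis using bD' by blast
qed

lemma baer_ext:
  assumes inj: "injective_module R M" and A: "submodule A R M" and fl: "f \<in> lin_map R M A M (carrier M)"
  shows "\<exists>F\<in>lin_map R M (carrier M) M (carrier M). \<forall>x\<in>A. F x = f x"
proof -
  define \<A> where "\<A> = {gr D h | D h. pext R M A f D h}"
  have base: "gr A f \<in> \<A>" unfolding \<A>_def pext_def using A fl by blast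
  have "\<forall>C\<in>chains \<A>. \<exists>U\<in>\<A>. \<forall>X\<in>C. X \<subseteq> U"
  proof
    fix C assume C: "C \<in> chains \<A>"
    show "\<exists>U\<in>\<A>. \<forall>X\<in>C. X \<subseteq> U"
    proof (cases "C = {}")
      case True then show ?thesis using base by blast
    next
      case False
      have "\<Union>C \<in> \<A>" unfolding \<A>_def
        by (rule chain_ub) (use C False in \<open>auto simp: chains_def \<A>_def\<close>)
      then show ?thesis by blast
    qed
  qed
  then obtain G where G: "G \<in> \<A>" and max: "\<forall>X\<in>\<A>. G \<subseteq> X \<longrightarrow> X = G" by (rule Zorn_Lemma2[elim_format]) blast
  obtain D h where Dh: "pext R M A f D h" "G = gr D h" using G \<A>_def by blast
  have DM: "D \<subseteq> carrier M" using Dh(1) submoduleE(1) unfolding pext_def by blast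
  have "D = carrier M"
  proof (rule ccontr)
    assume "D \<noteq> carrier M"
    then obtain b where b: "b \<in> carrier M" "b \<notin> D" using DM by blast
    obtain D' h' where D': "pext R M A f D' h'" "gr D h \<subseteq> gr D' h'" "b \<in> D'"
      using ext_step[OF inj Dh(1) b] by blast
    have "gr D' h' \<in> \<A>" unfolding \<A>_def using D'(1) by blast
    then have "gr D' h' = gr D h" using max D'(2) Dh(2) by blast
    then have "D' = D" by (rule gr_eq_dom)
    then show False using b D'(3) by simp
  qed
  then show ?thesis using Dh(1) unfolding pext_def by auto
qed

end


lemma inv_lin:
  assumes lmP: "left_module R P" and lmM: "left_module R M" and lmN: "left_module R N"
    and A: "submodule A R P"
    and al: "a \<in> lin_map R M (carrier M) N (carrier N)" and ai: "inj_on a (carrier M)"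
    and ul: "u \<in> lin_map R P A N (carrier N)" and ui: "\<And>x. x \<in> A \<Longrightarrow> u x \<in> a ` carrier M"
  shows "(\<lambda>x. inv_into (carrier M) a (u x)) \<in> lin_map R P A M (carrier M)"
    "\<And>x. x \<in> A \<Longrightarrow> a (inv_into (carrier M) a (u x)) = u x"
proof -
  interpret P: left_module R P by (rule lmP)
  interpret M: left_module R M by (rule lmM)
  note SA = P.submoduleE[OF A]
  define s where "s x = inv_into (carrier M) a (u x)" for x
  have as: "a (s x) = u x" "s x \<in> carrier M" if "x \<in> A" for x
    using ui[OF that] unfolding s_def by (auto simp: f_inv_into_f inv_into_into)
  have "s \<in> lin_map R P A M (carrier M)"
  proof (rule lin_mapI)
    show "s x \<in> carrier M" if "x \<in> A" for x using as that by blast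
    show "s (x \<oplus>\<^bsub>P\<^esub> y) = s x \<oplus>\<^bsub>M\<^esub> s y" if x: "x \<in> A" and y: "y \<in> A" for x y
    proof -
      have "a (s (x \<oplus>\<^bsub>P\<^esub> y)) = a (s x \<oplus>\<^bsub>M\<^esub> s y)"
        using as x y SA(3) lin_mapD(2)[OF ul x y] lin_mapD(2)[OF al, of "s x" "s y"] by simp
      then show ?thesis using ai as x y SA(3) by (meson M.M.add.m_closed inj_onD)
    qed
    show "s (c \<odot>\<^bsub>P\<^esub> x) = c \<odot>\<^bsub>M\<^esub> s x" if c: "c \<in> carrier R" and x: "x \<in> A" for c x
    proof -
      have "a (s (c \<odot>\<^bsub>P\<^esub> x)) = a (c \<odot>\<^bsub>M\<^esub> s x)"
        using as x c SA(5) lin_mapD(3)[OF ul c x] lin_mapD(3)[OF al c, of "s x"] by simp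
      then show ?thesis using ai as x c SA(5) M.smult_closed by (meson inj_onD)
    qed
  qed
  then show "(\<lambda>x. inv_into (carrier M) a (u x)) \<in> lin_map R P A M (carrier M)" unfolding s_def .
  show "\<And>x. x \<in> A \<Longrightarrow> a (inv_into (carrier M) a (u x)) = u x" using as unfolding s_def by blast
qed

lemma submodule_Inter:
  assumes lm: "left_module R E" and F: "F \<noteq> {}" "\<And>N. N \<in> F \<Longrightarrow> submodule N R E"
  shows "submodule (\<Inter>F) R E"
proof -
  interpret E: left_module R E by (rule lm)
  show ?thesis
  proof (rule E.submoduleI')
    show "\<Inter>F \<subseteq> carrier E" using F E.submoduleE(1) by blast
    show "\<zero>\<^bsub>E\<^esub> \<in> \<Inter>F" using F(2) E.submoduleE(2) by blast
    show "x \<oplus>\<^bsub>E\<^esub> y \<in> \<Inter>F" if "x \<in> \<Inter>F" "y \<in> \<Inter>F" for x y using that F(2) E.submoduleE(3) by blast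
    show "\<ominus>\<^bsub>E\<^esub> x \<in> \<Inter>F" if "x \<in> \<Inter>F" for x using that F(2) E.submoduleE(4) by blast
    show "a \<odot>\<^bsub>E\<^esub> x \<in> \<Inter>F" if "a \<in> carrier R" "x \<in> \<Inter>F" for a x using that F(2) E.submoduleE(5) by blast
  qed
qed

lemma sub_lm:
  assumes lm: "left_module R E" and H: "submodule H R E"
  shows "left_module R (E\<lparr>carrier := H\<rparr>)"
proof -
  interpret E: left_module R E by (rule lm)
  note S = E.submoduleE[OF H]
  have ag: "abelian_group (E\<lparr>carrier := H\<rparr>)"
  proof (rule abelian_groupI)
    fix x y z assume xyz: "x \<in> carrier (E\<lparr>carrier := H\<rparr>)" "y \<in> carrier (E\<lparr>carrier := H\<rparr>)" "z \<in> carrier (E\<lparr>carrier := H\<rparr>)"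
    then have c: "x \<in> carrier E" "y \<in> carrier E" "z \<in> carrier E" using S(1) by auto
    show "x \<oplus>\<^bsub>E\<lparr>carrier := H\<rparr>\<^esub> y \<in> carrier (E\<lparr>carrier := H\<rparr>)" using xyz S(3) by simp
    show "x \<oplus>\<^bsub>E\<lparr>carrier := H\<rparr>\<^esub> y \<oplus>\<^bsub>E\<lparr>carrier := H\<rparr>\<^esub> z = x \<oplus>\<^bsub>E\<lparr>carrier := H\<rparr>\<^esub> (y \<oplus>\<^bsub>E\<lparr>carrier := H\<rparr>\<^esub> z)"
      using c by (simp add: E.M.a_assoc)
    show "x \<oplus>\<^bsub>E\<lparr>carrier := H\<rparr>\<^esub> y = y \<oplus>\<^bsub>E\<lparr>carrier := H\<rparr>\<^esub> x" using c by (simp add: E.M.a_comm)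
    show "\<zero>\<^bsub>E\<lparr>carrier := H\<rparr>\<^esub> \<oplus>\<^bsub>E\<lparr>carrier := H\<rparr>\<^esub> x = x" using c by simp
    show "\<exists>y\<in>carrier (E\<lparr>carrier := H\<rparr>). y \<oplus>\<^bsub>E\<lparr>carrier := H\<rparr>\<^esub> x = \<zero>\<^bsub>E\<lparr>carrier := H\<rparr>\<^esub>"
      using xyz S(4) c by (intro bexI[of _ "\<ominus>\<^bsub>E\<^esub> x"]) (simp_all add: E.M.l_neg)
  next
    show "\<zero>\<^bsub>E\<lparr>carrier := H\<rparr>\<^esub> \<in> carrier (E\<lparr>carrier := H\<rparr>)" using S(2) by simp
  qed
  show ?thesis
    by (intro left_module.intro E.R.ring_axioms ag left_module_axioms.intro)
      (use S in \<open>auto simp: E.smult_l_distr E.smult_r_distr E.smult_assoc1 E.smult_one subsetD[OF S(1)]\<close>)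
qed





locale hull_ctx =
  fixes R :: "('r, 'c) ring_scheme" and M :: "('r, 'a) module" and E :: "('r, 'e) module" and \<iota> :: "'a \<Rightarrow> 'e"
  assumes lmM: "left_module R M" and hull: "injective_hull R M E \<iota>"
begin

abbreviation "H \<equiv> self_injective_hull R M E"
abbreviation "EH \<equiv> E\<lparr>carrier := H\<rparr>"
abbreviation "Q \<equiv> End_ring R EH"

lemma lmE: "left_module R E" using hull by (simp add: injective_hull_def)
lemma injE: "injective_module R E" using hull by (simp add: injective_hull_def)
lemma iota_l: "\<iota> \<in> lin_map R M (carrier M) E (carrier E)" using hull by (simp add: injective_hull_def)
lemma iota_i: "inj_on \<iota> (carrier M)" using hull by (simp add: injective_hull_def)

sublocale M: left_module R M by (rule lmM)
sublocale E: left_module R E by (rule lmE)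

lemma ess: "nonzero_submodule R E N \<Longrightarrow> \<exists>x\<in>carrier M. \<iota> x \<in> N \<and> \<iota> x \<noteq> \<zero>\<^bsub>E\<^esub>"
proof -
  assume N: "nonzero_submodule R E N"
  then have "N \<inter> \<iota> ` carrier M \<noteq> {\<zero>\<^bsub>E\<^esub>}" using hull by (simp add: injective_hull_def)
  moreover have "\<zero>\<^bsub>E\<^esub> \<in> N" using N E.submoduleE(2) by (simp add: nonzero_submodule_def)
  moreover have "\<zero>\<^bsub>E\<^esub> \<in> \<iota> ` carrier M"
    using lin_map_zero[OF lmM lmE M.submodule_carrier iota_l subset_refl] by force
  ultimately show ?thesis by blast
qed

lemma iota0: "\<iota> \<zero>\<^bsub>M\<^esub> = \<zero>\<^bsub>E\<^esub>"
  by (rule lin_map_zero[OF lmM lmE M.submodule_carrier iota_l subset_refl])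

lemma iota_nz: "x \<in> carrier M \<Longrightarrow> x \<noteq> \<zero>\<^bsub>M\<^esub> \<Longrightarrow> \<iota> x \<noteq> \<zero>\<^bsub>E\<^esub>"
  using inj_onD[OF iota_i, of x "\<zero>\<^bsub>M\<^esub>"] iota0 by auto

lemma iota_M: "x \<in> carrier M \<Longrightarrow> \<iota> x \<in> carrier E"
  using lin_mapD(1)[OF iota_l] .

definition gens where "gens = \<Union>{f ` carrier M | f. f \<in> lin_map R M (carrier M) E (carrier E)}"

lemma H_def': "H = \<Inter>{N. submodule N R E \<and> gens \<subseteq> N}"
  by (simp add: self_injective_hull_def generated_submodule_def gens_def)

lemma gens_E: "gens \<subseteq> carrier E"
proof
  fix x assume "x \<in> gens"
  then obtain f m where "f \<in> lin_map R M (carrier M) E (carrier E)" "m \<in> carrier M" "x = f m"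
    unfolding gens_def by blast
  then show "x \<in> carrier E" using lin_mapD(1) by metis
qed

lemma Hs: "submodule H R E"
  unfolding H_def'
proof (rule submodule_Inter[OF lmE])
  show "{N. submodule N R E \<and> gens \<subseteq> N} \<noteq> {}" using E.submodule_carrier gens_E by blast
qed simp

lemma img_H: "g \<in> lin_map R M (carrier M) E (carrier E) \<Longrightarrow> x \<in> carrier M \<Longrightarrow> g x \<in> H"
  unfolding H_def' gens_def by blast

lemma H_ind: "submodule P R E \<Longrightarrow> (\<And>g x. g \<in> lin_map R M (carrier M) E (carrier E) \<Longrightarrow> x \<in> carrier M \<Longrightarrow> g x \<in> P) \<Longrightarrow> H \<subseteq> P"
  unfolding H_def' gens_def by blast

lemma HE: "H \<subseteq> carrier E" using E.submoduleE(1)[OF Hs] .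

lemma iota_H: "x \<in> carrier M \<Longrightarrow> \<iota> x \<in> H" by (rule img_H[OF iota_l])

lemma lmH: "left_module R EH" by (rule sub_lm[OF lmE Hs])

lemma lin_EH: "lin_map R EH A N B = lin_map R E A N B"
  by (simp add: lin_map_def)

lemma Q_carrier: "F \<in> carrier Q \<longleftrightarrow> F \<in> lin_map R E H E H \<and> F \<in> extensional H"
  by (simp add: End_ring_def lin_map_def)

lemma QI: "F \<in> lin_map R E H E H \<Longrightarrow> restrict F H \<in> carrier Q"
  using left_module.End_memI[OF lmH, of F] by (simp add: lin_map_def)

lemma Q_lin: "F \<in> carrier Q \<Longrightarrow> F \<in> lin_map R E H E (carrier E)"
proof -
  assume "F \<in> carrier Q"
  then have Fl: "F \<in> lin_map R E H E H" by (simp add: Q_carrier)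
  show ?thesis by (rule lin_map_mono[OF Fl subset_refl]) (use lin_mapD(1)[OF Fl] HE in blast)
qed

lemma Q_ring: "ring Q" by (rule left_module.End_ring_is_ring[OF lmH])


lemma Q_apply_mult: "x \<in> H \<Longrightarrow> (F \<otimes>\<^bsub>Q\<^esub> G) x = G (F x)"
  using left_module.End_apply_mult[OF lmH, of x F G] by simp
lemma Q_apply_one: "x \<in> H \<Longrightarrow> \<one>\<^bsub>Q\<^esub> x = x"
  using left_module.End_apply_one[OF lmH, of x] by simp
lemma Q_apply_zero: "x \<in> H \<Longrightarrow> \<zero>\<^bsub>Q\<^esub> x = \<zero>\<^bsub>E\<^esub>"
  using left_module.End_apply_zero[OF lmH, of x] by simp
lemma Q_apply_add: "x \<in> H \<Longrightarrow> (F \<oplus>\<^bsub>Q\<^esub> G) x = F x \<oplus>\<^bsub>E\<^esub> G x"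
  using left_module.End_apply_add[OF lmH, of x F G] by simp
lemma Q_eqI: "F \<in> carrier Q \<Longrightarrow> G \<in> carrier Q \<Longrightarrow> (\<And>x. x \<in> H \<Longrightarrow> F x = G x) \<Longrightarrow> F = G"
  using left_module.End_eqI[OF lmH, of F G] by simp
lemma Q_closed: "F \<in> carrier Q \<Longrightarrow> x \<in> H \<Longrightarrow> F x \<in> H"
  using left_module.End_closed[OF lmH, of F x] by simp

lemma nzE_inj:
  assumes mono: "monoform R M" and gl: "g \<in> lin_map R M (carrier M) E (carrier E)"
    and ex: "\<exists>x\<in>carrier M. g x \<noteq> \<zero>\<^bsub>E\<^esub>"
  shows "inj_on g (carrier M)"
proof -
  note CM = M.submodule_carrier
  have Is: "submodule (\<iota> ` carrier M) R E" by (rule image_submodule[OF lmM lmE CM iota_l subset_refl])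
  have Gs: "submodule (g ` carrier M) R E" by (rule image_submodule[OF lmM lmE CM gl subset_refl])
  define N where "N = {x \<in> carrier M. g x \<in> \<iota> ` carrier M}"
  have Ns: "submodule N R M" unfolding N_def by (rule preimage_submodule[OF lmM lmE CM gl subset_refl Is])
  have g0: "g \<zero>\<^bsub>M\<^esub> = \<zero>\<^bsub>E\<^esub>" by (rule lin_map_zero[OF lmM lmE CM gl subset_refl])
  have Gnz: "nonzero_submodule R E (g ` carrier M)" unfolding nonzero_submodule_def using Gs ex by force
  obtain m0 where m0: "m0 \<in> carrier M" "\<iota> m0 \<in> g ` carrier M" "\<iota> m0 \<noteq> \<zero>\<^bsub>E\<^esub>" using ess[OF Gnz] by blast
  obtain x0 where x0: "x0 \<in> carrier M" "g x0 = \<iota> m0" using m0(2) by auto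
  have x0N: "x0 \<in> N" unfolding N_def using x0 m0(1) by auto
  have x0nz: "x0 \<noteq> \<zero>\<^bsub>M\<^esub>" using x0 m0(3) g0 by auto
  have gl': "g \<in> lin_map R M N E (carrier E)" by (rule lin_map_mono[OF gl]) (use N_def lin_mapD(1)[OF gl] in auto)
  have ui: "\<And>x. x \<in> N \<Longrightarrow> g x \<in> \<iota> ` carrier M" unfolding N_def by blast
  define k where "k x = inv_into (carrier M) \<iota> (g x)" for x
  have kl: "k \<in> lin_map R M N M (carrier M)" unfolding k_def by (rule inv_lin(1)[OF lmM lmM lmE Ns iota_l iota_i gl' ui])
  have ik: "\<iota> (k x) = g x" if "x \<in> N" for x unfolding k_def by (rule inv_lin(2)[OF lmM lmM lmE Ns iota_l iota_i gl' ui that])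
  have kx0: "k x0 \<noteq> \<zero>\<^bsub>M\<^esub>" using ik[OF x0N] x0 m0(3) iota0 by auto
  have knz: "k y \<noteq> \<zero>\<^bsub>M\<^esub>" if "y \<in> N" "y \<noteq> \<zero>\<^bsub>M\<^esub>" for y
    using M.mono_inj[OF mono Ns kl _ that] x0N kx0 by blast
  have "\<forall>z\<in>carrier M. g z = \<zero>\<^bsub>E\<^esub> \<longrightarrow> z = \<zero>\<^bsub>M\<^esub>"
  proof (rule ccontr)
    assume "\<not> (\<forall>z\<in>carrier M. g z = \<zero>\<^bsub>E\<^esub> \<longrightarrow> z = \<zero>\<^bsub>M\<^esub>)"
    then obtain z where z: "z \<in> carrier M" "g z = \<zero>\<^bsub>E\<^esub>" "z \<noteq> \<zero>\<^bsub>M\<^esub>" by blast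
    define Z where "Z = {x \<in> carrier M. g x = \<zero>\<^bsub>E\<^esub>}"
    have Zs: "submodule Z R M" unfolding Z_def by (rule kernel_submodule[OF lmM lmE CM gl subset_refl])
    have Znz: "nonzero_submodule R M Z" unfolding nonzero_submodule_def using Zs z Z_def by auto
    have Nnz: "nonzero_submodule R M N" unfolding nonzero_submodule_def using Ns x0N x0nz by auto
    obtain w where w: "w \<in> Z \<inter> N" "w \<noteq> \<zero>\<^bsub>M\<^esub>" using M.mono_uniform[OF mono Znz Nnz] by blast
    have "k w = inv_into (carrier M) \<iota> (\<iota> \<zero>\<^bsub>M\<^esub>)" unfolding k_def using w(1) Z_def iota0 by simp
    also have "\<dots> = \<zero>\<^bsub>M\<^esub>" using inv_into_f_f[OF iota_i M.M.zero_closed] .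
    finally show False using knz w by blast
  qed
  then show ?thesis using lin_map_inj_iff[OF lmM lmE CM gl subset_refl] by blast
qed

lemma vanish:
  assumes mono: "monoform R M" and Dl: "D \<in> lin_map R E H E (carrier E)"
    and Nnz: "nonzero_submodule R M N" and D0: "\<And>x. x \<in> N \<Longrightarrow> D (\<iota> x) = \<zero>\<^bsub>E\<^esub>"
  shows "\<And>y. y \<in> H \<Longrightarrow> D y = \<zero>\<^bsub>E\<^esub>"
proof -
  note CM = M.submodule_carrier
  have Ns: "submodule N R M" using Nnz by (simp add: nonzero_submodule_def)
  define Z where "Z = {y \<in> H. D y = \<zero>\<^bsub>E\<^esub>}"
  have Zs: "submodule Z R E" unfolding Z_def by (rule kernel_submodule[OF lmE lmE Hs Dl subset_refl])
  have Dz: "D \<zero>\<^bsub>E\<^esub> = \<zero>\<^bsub>E\<^esub>" by (rule lin_map_zero[OF lmE lmE Hs Dl subset_refl])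
  have "H \<subseteq> Z"
  proof (rule H_ind[OF Zs])
    fix g m assume gl: "g \<in> lin_map R M (carrier M) E (carrier E)" and m: "m \<in> carrier M"
    have gH: "g x \<in> H" if "x \<in> carrier M" for x by (rule img_H[OF gl that])
    have g0: "g \<zero>\<^bsub>M\<^esub> = \<zero>\<^bsub>E\<^esub>" by (rule lin_map_zero[OF lmM lmE CM gl subset_refl])
    have "D (g m) = \<zero>\<^bsub>E\<^esub>"
    proof (cases "\<exists>x\<in>carrier M. g x \<noteq> \<zero>\<^bsub>E\<^esub>")
      case False then show ?thesis using m Dz by auto
    next
      case True
      have gi: "inj_on g (carrier M)" by (rule nzE_inj[OF mono gl True])
      have gl': "g \<in> lin_map R M (carrier M) E H" by (rule lin_map_mono[OF gl subset_refl gH])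
      have Dgl: "(\<lambda>x. D (g x)) \<in> lin_map R M (carrier M) E (carrier E)" by (rule lin_map_comp[OF gl' Dl])
      have Gs: "submodule (g ` carrier M) R E" by (rule image_submodule[OF lmM lmE CM gl subset_refl])
      define P where "P = {x \<in> carrier M. \<iota> x \<in> g ` carrier M}"
      have Ps: "submodule P R M" unfolding P_def by (rule preimage_submodule[OF lmM lmE CM iota_l subset_refl Gs])
      have Gnz: "nonzero_submodule R E (g ` carrier M)" unfolding nonzero_submodule_def using Gs True by force
      obtain m1 where m1: "m1 \<in> carrier M" "\<iota> m1 \<in> g ` carrier M" "\<iota> m1 \<noteq> \<zero>\<^bsub>E\<^esub>" using ess[OF Gnz] by blast
      have m1P: "m1 \<in> P" using m1 P_def by auto
      have m1nz: "m1 \<noteq> \<zero>\<^bsub>M\<^esub>" using m1(3) iota0 by auto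
      have Pnz: "nonzero_submodule R M P" unfolding nonzero_submodule_def
        using Ps m1P m1nz by auto
      obtain m2 where m2: "m2 \<in> N \<inter> P" "m2 \<noteq> \<zero>\<^bsub>M\<^esub>" using M.mono_uniform[OF mono Nnz Pnz] by blast
      have m2M: "m2 \<in> carrier M" using m2 P_def by auto
      obtain x where x: "x \<in> carrier M" "\<iota> m2 = g x" using m2 P_def by auto
      have xnz: "x \<noteq> \<zero>\<^bsub>M\<^esub>" using iota_nz[OF m2M m2(2)] x g0 by auto
      have Dgx: "D (g x) = \<zero>\<^bsub>E\<^esub>" using D0[of m2] m2 x by simp
      show ?thesis
      proof (rule ccontr)
        assume "D (g m) \<noteq> \<zero>\<^bsub>E\<^esub>"
        then have "inj_on (\<lambda>x. D (g x)) (carrier M)" using nzE_inj[OF mono Dgl] m by blast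
        then have "x = \<zero>\<^bsub>M\<^esub>" using Dgx g0 Dz x(1) inj_onD[of "\<lambda>x. D (g x)" "carrier M" x "\<zero>\<^bsub>M\<^esub>"] by simp
        then show False using xnz by simp
      qed
    qed
    then show "g m \<in> Z" unfolding Z_def using gH[OF m] by simp
  qed
  then show "\<And>y. y \<in> H \<Longrightarrow> D y = \<zero>\<^bsub>E\<^esub>" unfolding Z_def by blast
qed

lemma Q_eq:
  assumes mono: "monoform R M" and F1: "F1 \<in> carrier Q" and F2: "F2 \<in> carrier Q"
    and Nnz: "nonzero_submodule R M N" and ag: "\<And>x. x \<in> N \<Longrightarrow> F1 (\<iota> x) = F2 (\<iota> x)"
  shows "F1 = F2"
proof -
  have l1: "F1 \<in> lin_map R E H E (carrier E)" and l2: "F2 \<in> lin_map R E H E (carrier E)" using Q_lin F1 F2 by auto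
  have Ns: "submodule N R M" using Nnz by (simp add: nonzero_submodule_def)
  define D where "D x = F1 x \<ominus>\<^bsub>E\<^esub> F2 x" for x
  have Dl: "D \<in> lin_map R E H E (carrier E)"
  proof (rule lin_mapI)
    show "D x \<in> carrier E" if "x \<in> H" for x using that lin_mapD(1)[OF l1] lin_mapD(1)[OF l2] unfolding D_def by (simp add: E.M.minus_eq)
    show "D (x \<oplus>\<^bsub>E\<^esub> y) = D x \<oplus>\<^bsub>E\<^esub> D y" if x: "x \<in> H" and y: "y \<in> H" for x y
    proof -
      have c: "F1 x \<in> carrier E" "F1 y \<in> carrier E" "F2 x \<in> carrier E" "F2 y \<in> carrier E"
        using x y lin_mapD(1)[OF l1] lin_mapD(1)[OF l2] by auto
      show ?thesis unfolding D_def using lin_mapD(2)[OF l1 x y] lin_mapD(2)[OF l2 x y] c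
        by (simp add: E.M.minus_eq E.M.minus_add E.M.a_ac)
    qed
    show "D (a \<odot>\<^bsub>E\<^esub> x) = a \<odot>\<^bsub>E\<^esub> D x" if a: "a \<in> carrier R" and x: "x \<in> H" for a x
    proof -
      have c: "F1 x \<in> carrier E" "F2 x \<in> carrier E" using x lin_mapD(1)[OF l1] lin_mapD(1)[OF l2] by auto
      show ?thesis unfolding D_def using lin_mapD(3)[OF l1 a x] lin_mapD(3)[OF l2 a x] c a
        by (simp add: E.M.minus_eq E.smult_r_distr E.smult_minus2)
    qed
  qed
  have D0: "D (\<iota> x) = \<zero>\<^bsub>E\<^esub>" if "x \<in> N" for x
  proof -
    have "x \<in> carrier M" using that M.submoduleE(1)[OF Ns] by blast
    then have "F2 (\<iota> x) \<in> carrier E" using lin_mapD(1)[OF l2] iota_H by blast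
    then show ?thesis unfolding D_def using ag[OF that] by (simp add: E.M.minus_eq E.M.r_neg)
  qed
  have "F1 y = F2 y" if "y \<in> H" for y
  proof -
    have "D y = \<zero>\<^bsub>E\<^esub>" by (rule vanish[OF mono Dl Nnz D0 that])
    then show ?thesis unfolding D_def using E.minus_zero_iff lin_mapD(1)[OF l1 that] lin_mapD(1)[OF l2 that] by blast
  qed
  then show ?thesis using Q_eqI F1 F2 by blast
qed

lemma ext_H:
  assumes As: "submodule A R E" and AH: "A \<subseteq> H" and kl: "k \<in> lin_map R E A E (carrier E)"
  shows "\<exists>F\<in>carrier Q. \<forall>x\<in>A. F x = k x"
proof -
  obtain F0 where F0: "F0 \<in> lin_map R E (carrier E) E (carrier E)" "\<forall>x\<in>A. F0 x = k x"
    using E.baer_ext[OF injE As kl] by blast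
  have F0H: "F0 \<in> lin_map R E H E (carrier E)" by (rule lin_map_mono[OF F0(1) HE]) (use lin_mapD(1)[OF F0(1)] HE in blast)
  define P where "P = {x \<in> H. F0 x \<in> H}"
  have Ps: "submodule P R E" unfolding P_def by (rule preimage_submodule[OF lmE lmE Hs F0H subset_refl Hs])
  have "H \<subseteq> P"
  proof (rule H_ind[OF Ps])
    fix g m assume gl: "g \<in> lin_map R M (carrier M) E (carrier E)" and m: "m \<in> carrier M"
    have "F0 (g m) \<in> H" by (rule img_H[OF lin_map_comp[OF gl F0(1)] m])
    then show "g m \<in> P" unfolding P_def using img_H[OF gl m] by simp
  qed
  then have F0HH: "F0 \<in> lin_map R E H E H" by (rule_tac lin_map_mono[OF F0(1) HE]) (auto simp: P_def)
  have "restrict F0 H \<in> carrier Q" by (rule QI[OF F0HH])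
  moreover have "\<forall>x\<in>A. restrict F0 H x = k x" using F0(2) AH by auto
  ultimately show ?thesis by blast
qed


lemma Q_closed_ops:
  "F \<in> carrier Q \<Longrightarrow> G \<in> carrier Q \<Longrightarrow> F \<otimes>\<^bsub>Q\<^esub> G \<in> carrier Q"
  "F \<in> carrier Q \<Longrightarrow> G \<in> carrier Q \<Longrightarrow> F \<oplus>\<^bsub>Q\<^esub> G \<in> carrier Q"
  "\<one>\<^bsub>Q\<^esub> \<in> carrier Q" "\<zero>\<^bsub>Q\<^esub> \<in> carrier Q"
  using left_module.End_mult_closed[OF lmH, of F G] left_module.End_add_closed[OF lmH, of F G]
    left_module.End_one_closed[OF lmH] left_module.End_zero_closed[OF lmH] by auto

lemma CMnz: "monoform R M \<Longrightarrow> nonzero_submodule R M (carrier M)"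
  using M.submodule_carrier unfolding monoform_def nonzero_module_def nonzero_submodule_def by blast

lemma iota_lH: "\<iota> \<in> lin_map R M (carrier M) E H"
  by (rule lin_map_mono[OF iota_l subset_refl iota_H])

lemma Q_unit:
  assumes mono: "monoform R M" and F: "F \<in> carrier Q" and Fnz: "F \<noteq> \<zero>\<^bsub>Q\<^esub>"
  shows "F \<in> Units Q"
proof -
  note CM = M.submodule_carrier
  have Fl: "F \<in> lin_map R E H E (carrier E)" by (rule Q_lin[OF F])
  have Fil: "(\<lambda>x. F (\<iota> x)) \<in> lin_map R M (carrier M) E (carrier E)" by (rule lin_map_comp[OF iota_lH Fl])
  have ex: "\<exists>x\<in>carrier M. F (\<iota> x) \<noteq> \<zero>\<^bsub>E\<^esub>"
  proof (rule ccontr)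
    assume "\<not> (\<exists>x\<in>carrier M. F (\<iota> x) \<noteq> \<zero>\<^bsub>E\<^esub>)"
    then have "\<And>x. x \<in> carrier M \<Longrightarrow> F (\<iota> x) = \<zero>\<^bsub>Q\<^esub> (\<iota> x)" using Q_apply_zero iota_H by auto
    then have "F = \<zero>\<^bsub>Q\<^esub>" using Q_eq[OF mono F Q_closed_ops(4) CMnz[OF mono]] by blast
    then show False using Fnz by simp
  qed
  have Fi: "inj_on (\<lambda>x. F (\<iota> x)) (carrier M)" by (rule nzE_inj[OF mono Fil ex])
  define A where "A = (\<lambda>x. F (\<iota> x)) ` carrier M"
  have As: "submodule A R E" unfolding A_def by (rule image_submodule[OF lmM lmE CM Fil subset_refl])
  have AH: "A \<subseteq> H" unfolding A_def using Q_closed[OF F] iota_H by blast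
  have idl: "(\<lambda>y. y) \<in> lin_map R E A E (carrier E)" by (rule lin_mapI) (use AH HE in auto)
  have idr: "\<And>y. y \<in> A \<Longrightarrow> y \<in> (\<lambda>x. F (\<iota> x)) ` carrier M" unfolding A_def .
  have invl: "(\<lambda>y. inv_into (carrier M) (\<lambda>x. F (\<iota> x)) y) \<in> lin_map R E A M (carrier M)"
    by (rule inv_lin(1)[OF lmE lmM lmE As Fil Fi idl idr])
  have invr: "F (\<iota> (inv_into (carrier M) (\<lambda>x. F (\<iota> x)) y)) = y" if "y \<in> A" for y
    by (rule inv_lin(2)[OF lmE lmM lmE As Fil Fi idl idr that])
  define k where "k y = \<iota> (inv_into (carrier M) (\<lambda>x. F (\<iota> x)) y)" for y
  have kl: "k \<in> lin_map R E A E (carrier E)" unfolding k_def by (rule lin_map_comp[OF invl iota_l])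
  obtain G where G: "G \<in> carrier Q" "\<forall>y\<in>A. G y = k y" using ext_H[OF As AH kl] by blast
  have FG: "F \<otimes>\<^bsub>Q\<^esub> G = \<one>\<^bsub>Q\<^esub>"
  proof (rule Q_eq[OF mono Q_closed_ops(1)[OF F G(1)] Q_closed_ops(3) CMnz[OF mono]])
    fix m assume m: "m \<in> carrier M"
    have "F (\<iota> m) \<in> A" unfolding A_def using m by blast
    then have "G (F (\<iota> m)) = \<iota> m" using G(2) k_def inv_into_f_f[OF Fi m] by simp
    then show "(F \<otimes>\<^bsub>Q\<^esub> G) (\<iota> m) = \<one>\<^bsub>Q\<^esub> (\<iota> m)" using Q_apply_mult Q_apply_one iota_H[OF m] by simp
  qed
  define N' where "N' = {m \<in> carrier M. \<iota> m \<in> A}"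
  have N's: "submodule N' R M" unfolding N'_def by (rule preimage_submodule[OF lmM lmE CM iota_l subset_refl As])
  obtain x where x: "x \<in> carrier M" "F (\<iota> x) \<noteq> \<zero>\<^bsub>E\<^esub>" using ex by blast
  have Anz: "nonzero_submodule R E A" unfolding nonzero_submodule_def A_def using As x unfolding A_def by force
  obtain m0 where m0: "m0 \<in> carrier M" "\<iota> m0 \<in> A" "\<iota> m0 \<noteq> \<zero>\<^bsub>E\<^esub>" using ess[OF Anz] by blast
  have m0N: "m0 \<in> N'" using m0 N'_def by simp
  have m0nz: "m0 \<noteq> \<zero>\<^bsub>M\<^esub>" using m0(3) iota0 by auto
  have N'nz: "nonzero_submodule R M N'" unfolding nonzero_submodule_def using N's m0N m0nz by auto
  have GF: "G \<otimes>\<^bsub>Q\<^esub> F = \<one>\<^bsub>Q\<^esub>"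
  proof (rule Q_eq[OF mono Q_closed_ops(1)[OF G(1) F] Q_closed_ops(3) N'nz])
    fix m assume m: "m \<in> N'"
    then have mA: "\<iota> m \<in> A" and mM: "m \<in> carrier M" using N'_def by auto
    have "F (G (\<iota> m)) = \<iota> m" using G(2) mA k_def invr[OF mA] by simp
    then show "(G \<otimes>\<^bsub>Q\<^esub> F) (\<iota> m) = \<one>\<^bsub>Q\<^esub> (\<iota> m)" using Q_apply_mult Q_apply_one iota_H[OF mM] by simp
  qed
  show ?thesis unfolding Units_def using F G(1) FG GF by blast
qed

lemma Q_divring:
  assumes mono: "monoform R M"
  shows "division_ring Q"
proof -
  obtain m where m: "m \<in> carrier M" "m \<noteq> \<zero>\<^bsub>M\<^esub>" using mono M.M.zero_closed unfolding monoform_def nonzero_module_def by blast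
  have "\<one>\<^bsub>Q\<^esub> (\<iota> m) \<noteq> \<zero>\<^bsub>Q\<^esub> (\<iota> m)" using Q_apply_one Q_apply_zero iota_H[OF m(1)] iota_nz[OF m] by simp
  then have "\<one>\<^bsub>Q\<^esub> \<noteq> \<zero>\<^bsub>Q\<^esub>" by metis
  then show ?thesis unfolding division_ring_def using Q_ring Q_unit[OF mono] by blast
qed


definition phi where "phi f = (SOME F. F \<in> carrier Q \<and> (\<forall>m\<in>carrier M. F (\<iota> m) = \<iota> (f m)))"

lemma phi_ex:
  assumes f: "f \<in> carrier (End_ring R M)"
  shows "\<exists>F. F \<in> carrier Q \<and> (\<forall>m\<in>carrier M. F (\<iota> m) = \<iota> (f m))"
proof -
  note CM = M.submodule_carrier
  define A where "A = \<iota> ` carrier M"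
  have As: "submodule A R E" unfolding A_def by (rule image_submodule[OF lmM lmE CM iota_l subset_refl])
  have AH: "A \<subseteq> H" unfolding A_def using iota_H by blast
  have idl: "(\<lambda>y. y) \<in> lin_map R E A E (carrier E)" by (rule lin_mapI) (use AH HE in auto)
  have idr: "\<And>y. y \<in> A \<Longrightarrow> y \<in> \<iota> ` carrier M" unfolding A_def .
  have invl: "(\<lambda>y. inv_into (carrier M) \<iota> y) \<in> lin_map R E A M (carrier M)"
    by (rule inv_lin(1)[OF lmE lmM lmE As iota_l iota_i idl idr])
  define k where "k y = \<iota> (f (inv_into (carrier M) \<iota> y))" for y
  have kl: "k \<in> lin_map R E A E (carrier E)" unfolding k_def
    by (rule lin_map_comp[OF lin_map_comp[OF invl M.End_lin[OF f]] iota_l])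
  obtain F where F: "F \<in> carrier Q" "\<forall>y\<in>A. F y = k y" using ext_H[OF As AH kl] by blast
  have "\<forall>m\<in>carrier M. F (\<iota> m) = \<iota> (f m)"
  proof
    fix m assume m: "m \<in> carrier M"
    then have "\<iota> m \<in> A" unfolding A_def by blast
    then show "F (\<iota> m) = \<iota> (f m)" using F(2) k_def inv_into_f_f[OF iota_i m] by simp
  qed
  then show ?thesis using F(1) by blast
qed

lemma phi_prop:
  assumes f: "f \<in> carrier (End_ring R M)"
  shows "phi f \<in> carrier Q" "\<And>m. m \<in> carrier M \<Longrightarrow> phi f (\<iota> m) = \<iota> (f m)"
proof -
  have "phi f \<in> carrier Q \<and> (\<forall>m\<in>carrier M. phi f (\<iota> m) = \<iota> (f m))"
    unfolding phi_def by (rule someI_ex[OF phi_ex[OF f]])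
  then show "phi f \<in> carrier Q" "\<And>m. m \<in> carrier M \<Longrightarrow> phi f (\<iota> m) = \<iota> (f m)" by auto
qed

lemma phi_uniq:
  assumes mono: "monoform R M" and f: "f \<in> carrier (End_ring R M)" and F: "F \<in> carrier Q"
    and ag: "\<And>m. m \<in> carrier M \<Longrightarrow> F (\<iota> m) = \<iota> (f m)"
  shows "phi f = F"
  by (rule Q_eq[OF mono phi_prop(1)[OF f] F CMnz[OF mono]]) (simp add: phi_prop(2)[OF f] ag)

lemma cm_imp_d:
  assumes comp: "compressible R M" and mono: "monoform R M"
  shows "division_ring_of_fractions (End_ring R M) Q phi"
proof -
  let ?S = "End_ring R M"
  note CM = M.submodule_carrier
  interpret QR: ring Q by (rule Q_ring)
  interpret SR: ring ?S by (rule M.End_ring_is_ring)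
  have dr: "division_ring Q" by (rule Q_divring[OF mono])
  have hom: "phi \<in> ring_hom ?S Q"
  proof (rule ring_hom_memI)
    show "phi x \<in> carrier Q" if "x \<in> carrier ?S" for x by (rule phi_prop(1)[OF that])
    show "phi (x \<otimes>\<^bsub>?S\<^esub> y) = phi x \<otimes>\<^bsub>Q\<^esub> phi y" if x: "x \<in> carrier ?S" and y: "y \<in> carrier ?S" for x y
    proof (rule phi_uniq[OF mono M.End_mult_closed[OF x y] Q_closed_ops(1)[OF phi_prop(1)[OF x] phi_prop(1)[OF y]]])
      fix m assume m: "m \<in> carrier M"
      have xm: "x m \<in> carrier M" by (rule M.End_closed[OF x m])
      show "(phi x \<otimes>\<^bsub>Q\<^esub> phi y) (\<iota> m) = \<iota> ((x \<otimes>\<^bsub>?S\<^esub> y) m)"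
        using Q_apply_mult[OF iota_H[OF m]] phi_prop(2)[OF x m] phi_prop(2)[OF y xm] M.End_apply_mult[OF m] by simp
    qed
    show "phi (x \<oplus>\<^bsub>?S\<^esub> y) = phi x \<oplus>\<^bsub>Q\<^esub> phi y" if x: "x \<in> carrier ?S" and y: "y \<in> carrier ?S" for x y
    proof (rule phi_uniq[OF mono M.End_add_closed[OF x y] Q_closed_ops(2)[OF phi_prop(1)[OF x] phi_prop(1)[OF y]]])
      fix m assume m: "m \<in> carrier M"
      have xm: "x m \<in> carrier M" "y m \<in> carrier M" by (rule M.End_closed[OF x m], rule M.End_closed[OF y m])
      show "(phi x \<oplus>\<^bsub>Q\<^esub> phi y) (\<iota> m) = \<iota> ((x \<oplus>\<^bsub>?S\<^esub> y) m)"
        using Q_apply_add[OF iota_H[OF m]] phi_prop(2)[OF x m] phi_prop(2)[OF y m] M.End_apply_add[OF m]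
          lin_mapD(2)[OF iota_l xm] by simp
    qed
    show "phi \<one>\<^bsub>?S\<^esub> = \<one>\<^bsub>Q\<^esub>"
      by (rule phi_uniq[OF mono M.End_one_closed Q_closed_ops(3)]) (simp add: Q_apply_one iota_H M.End_apply_one)
  qed
  have inj: "inj_on phi (carrier ?S)"
  proof (rule inj_onI)
    fix x y assume x: "x \<in> carrier ?S" and y: "y \<in> carrier ?S" and e: "phi x = phi y"
    show "x = y"
    proof (rule M.End_eqI[OF x y])
      fix m assume m: "m \<in> carrier M"
      have "\<iota> (x m) = \<iota> (y m)" using phi_prop(2)[OF x m] phi_prop(2)[OF y m] e by simp
      then show "x m = y m" using inj_onD[OF iota_i] M.End_closed x y m by blast
    qed
  qed
  have phi0: "phi \<zero>\<^bsub>?S\<^esub> = \<zero>\<^bsub>Q\<^esub>" by (rule ring_hom_zero[OF hom SR.ring_axioms QR.ring_axioms])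
  have units: "phi s \<in> Units Q" if s: "s \<in> carrier ?S - {\<zero>\<^bsub>?S\<^esub>}" for s
  proof -
    have sS: "s \<in> carrier ?S" and snz: "s \<noteq> \<zero>\<^bsub>?S\<^esub>" using s by auto
    have "phi s \<noteq> \<zero>\<^bsub>Q\<^esub>" using inj phi0 sS snz SR.zero_closed by (metis inj_onD)
    then show ?thesis by (rule Q_unit[OF mono phi_prop(1)[OF sS]])
  qed
  obtain m where m: "m \<in> carrier M" "m \<noteq> \<zero>\<^bsub>M\<^esub>" using mono M.M.zero_closed unfolding monoform_def nonzero_module_def by blast
  have one_nz: "\<one>\<^bsub>?S\<^esub> \<noteq> \<zero>\<^bsub>?S\<^esub>" using M.End_nonzero_iff[OF M.End_one_closed] m M.End_apply_one by auto
  have frac: "\<exists>s\<in>carrier ?S - {\<zero>\<^bsub>?S\<^esub>}. \<exists>t\<in>carrier ?S. q = inv\<^bsub>Q\<^esub> (phi s) \<otimes>\<^bsub>Q\<^esub> phi t"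
    if q: "q \<in> carrier Q" for q
  proof (cases "q = \<zero>\<^bsub>Q\<^esub>")
    case True
    have "inv\<^bsub>Q\<^esub> (phi \<one>\<^bsub>?S\<^esub>) \<otimes>\<^bsub>Q\<^esub> phi \<zero>\<^bsub>?S\<^esub> = \<zero>\<^bsub>Q\<^esub>"
      using phi0 ring_hom_one[OF hom] by simp
    then have e: "q = inv\<^bsub>Q\<^esub> (phi \<one>\<^bsub>?S\<^esub>) \<otimes>\<^bsub>Q\<^esub> phi \<zero>\<^bsub>?S\<^esub>" using True by simp
    show ?thesis
    proof (rule bexI[of _ "\<one>\<^bsub>?S\<^esub>"])
      show "\<exists>t\<in>carrier ?S. q = inv\<^bsub>Q\<^esub> (phi \<one>\<^bsub>?S\<^esub>) \<otimes>\<^bsub>Q\<^esub> phi t"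
        using e SR.zero_closed by blast
      show "\<one>\<^bsub>?S\<^esub> \<in> carrier ?S - {\<zero>\<^bsub>?S\<^esub>}" using one_nz by simp
    qed
  next
    case False
    have ql: "q \<in> lin_map R E H E (carrier E)" by (rule Q_lin[OF q])
    have qil: "(\<lambda>x. q (\<iota> x)) \<in> lin_map R M (carrier M) E (carrier E)" by (rule lin_map_comp[OF iota_lH ql])
    have ex: "\<exists>x\<in>carrier M. q (\<iota> x) \<noteq> \<zero>\<^bsub>E\<^esub>"
    proof (rule ccontr)
      assume "\<not> (\<exists>x\<in>carrier M. q (\<iota> x) \<noteq> \<zero>\<^bsub>E\<^esub>)"
      then have "\<And>x. x \<in> carrier M \<Longrightarrow> q (\<iota> x) = \<zero>\<^bsub>Q\<^esub> (\<iota> x)" using Q_apply_zero iota_H by auto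
      then have "q = \<zero>\<^bsub>Q\<^esub>" using Q_eq[OF mono q Q_closed_ops(4) CMnz[OF mono]] by blast
      then show False using False by simp
    qed
    have Is: "submodule (\<iota> ` carrier M) R E" by (rule image_submodule[OF lmM lmE CM iota_l subset_refl])
    have Gs: "submodule ((\<lambda>x. q (\<iota> x)) ` carrier M) R E" by (rule image_submodule[OF lmM lmE CM qil subset_refl])
    have Gnz: "nonzero_submodule R E ((\<lambda>x. q (\<iota> x)) ` carrier M)" unfolding nonzero_submodule_def using Gs ex by force
    obtain m1 where m1: "m1 \<in> carrier M" "\<iota> m1 \<in> (\<lambda>x. q (\<iota> x)) ` carrier M" "\<iota> m1 \<noteq> \<zero>\<^bsub>E\<^esub>" using ess[OF Gnz] by blast
    obtain x1 where x1: "x1 \<in> carrier M" "q (\<iota> x1) = \<iota> m1" using m1(2) by auto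
    have qi0: "q (\<iota> \<zero>\<^bsub>M\<^esub>) = \<zero>\<^bsub>E\<^esub>" by (rule lin_map_zero[OF lmM lmE CM qil subset_refl])
    define N0 where "N0 = {x \<in> carrier M. q (\<iota> x) \<in> \<iota> ` carrier M}"
    have N0s: "submodule N0 R M" unfolding N0_def by (rule preimage_submodule[OF lmM lmE CM qil subset_refl Is])
    have x1N: "x1 \<in> N0" unfolding N0_def using x1 m1(1) by auto
    have x1nz: "x1 \<noteq> \<zero>\<^bsub>M\<^esub>" using x1 m1(3) qi0 by auto
    have N0nz: "nonzero_submodule R M N0" unfolding nonzero_submodule_def using N0s x1N x1nz by auto
    obtain u where ul: "u \<in> lin_map R M (carrier M) M N0" and ui: "inj_on u (carrier M)"
      using comp N0nz unfolding compressible_def embeds_def by blast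
    have uM: "u x \<in> carrier M" if "x \<in> carrier M" for x
      using lin_mapD(1)[OF ul that] M.submoduleE(1)[OF N0s] by blast
    have ul': "u \<in> lin_map R M (carrier M) M (carrier M)" by (rule lin_map_mono[OF ul subset_refl uM])
    define s where "s = restrict u (carrier M)"
    have sS: "s \<in> carrier ?S" unfolding s_def by (rule M.End_memI[OF ul'])
    have um: "u m \<noteq> \<zero>\<^bsub>M\<^esub>" using lin_map_inj_iff[OF lmM lmM CM ul' subset_refl] ui m by blast
    have snz: "s \<noteq> \<zero>\<^bsub>?S\<^esub>" using M.End_nonzero_iff[OF sS] m um unfolding s_def by auto
    define w where "w x = q (\<iota> (u x))" for x
    have wl: "w \<in> lin_map R M (carrier M) E (carrier E)" unfolding w_def by (rule lin_map_comp[OF ul' qil])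
    have wi: "w x \<in> \<iota> ` carrier M" if "x \<in> carrier M" for x
      using lin_mapD(1)[OF ul that] unfolding w_def N0_def by blast
    have t0l: "(\<lambda>x. inv_into (carrier M) \<iota> (w x)) \<in> lin_map R M (carrier M) M (carrier M)"
      by (rule inv_lin(1)[OF lmM lmM lmE CM iota_l iota_i wl wi])
    have t0r: "\<iota> (inv_into (carrier M) \<iota> (w x)) = w x" if "x \<in> carrier M" for x
      by (rule inv_lin(2)[OF lmM lmM lmE CM iota_l iota_i wl wi that])
    define t where "t = restrict (\<lambda>x. inv_into (carrier M) \<iota> (w x)) (carrier M)"
    have tS: "t \<in> carrier ?S" unfolding t_def by (rule M.End_memI[OF t0l])
    have key: "phi s \<otimes>\<^bsub>Q\<^esub> q = phi t"
    proof (rule Q_eq[OF mono Q_closed_ops(1)[OF phi_prop(1)[OF sS] q] phi_prop(1)[OF tS] CMnz[OF mono]])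
      fix x assume x: "x \<in> carrier M"
      have "(phi s \<otimes>\<^bsub>Q\<^esub> q) (\<iota> x) = q (phi s (\<iota> x))" by (rule Q_apply_mult[OF iota_H[OF x]])
      also have "\<dots> = q (\<iota> (u x))" using phi_prop(2)[OF sS x] x unfolding s_def by simp
      also have "\<dots> = \<iota> (t x)" using t0r[OF x] x unfolding t_def w_def by simp
      also have "\<dots> = phi t (\<iota> x)" using phi_prop(2)[OF tS x] by simp
      finally show "(phi s \<otimes>\<^bsub>Q\<^esub> q) (\<iota> x) = phi t (\<iota> x)" .
    qed
    have psU: "phi s \<in> Units Q" using units sS snz by blast
    have "inv\<^bsub>Q\<^esub> (phi s) \<otimes>\<^bsub>Q\<^esub> phi t = inv\<^bsub>Q\<^esub> (phi s) \<otimes>\<^bsub>Q\<^esub> (phi s \<otimes>\<^bsub>Q\<^esub> q)" using key by simp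
    also have "\<dots> = (inv\<^bsub>Q\<^esub> (phi s) \<otimes>\<^bsub>Q\<^esub> phi s) \<otimes>\<^bsub>Q\<^esub> q"
      by (rule QR.m_assoc[symmetric]) (use psU q in \<open>auto intro: QR.Units_closed QR.Units_inv_closed\<close>)
    also have "\<dots> = q" using psU q by (simp add: QR.Units_l_inv)
    finally show ?thesis using sS snz tS by blast
  qed
  show ?thesis unfolding division_ring_of_fractions_def
    using dr hom inj units frac by blast
qed


lemma d_imp_mono:
  assumes ore: "left_ore_domain (End_ring R M)"
    and ex: "\<exists>(Q' :: ('e \<Rightarrow> 'e) ring) \<phi>. division_ring_of_fractions (End_ring R M) Q' \<phi> \<and> Q \<simeq> Q'"
  shows "monoform R M"
proof -
  obtain Q' :: "('e \<Rightarrow> 'e) ring" and \<phi> where dr: "division_ring_of_fractions (End_ring R M) Q' \<phi>" and iso: "Q \<simeq> Q'"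
    using ex by blast
  have drQ': "division_ring Q'" using dr by (simp add: division_ring_of_fractions_def)
  have rQ': "ring Q'" using drQ' by (simp add: division_ring_def)
  interpret QR: ring Q by (rule Q_ring)
  interpret Q'R: ring Q' by (rule rQ')
  obtain \<psi> where \<psi>: "\<psi> \<in> ring_iso Q Q'" using iso unfolding is_ring_iso_def by blast
  have \<psi>h: "\<psi> \<in> ring_hom Q Q'" and \<psi>b: "bij_betw \<psi> (carrier Q) (carrier Q')" using \<psi> unfolding ring_iso_def by auto
  have \<psi>i: "inj_on \<psi> (carrier Q)" using \<psi>b by (rule bij_betw_imp_inj_on)
  have \<psi>s: "\<psi> ` carrier Q = carrier Q'" using \<psi>b by (rule bij_betw_imp_surj_on)
  have \<psi>0: "\<psi> \<zero>\<^bsub>Q\<^esub> = \<zero>\<^bsub>Q'\<^esub>" by (rule ring_hom_zero[OF \<psi>h QR.ring_axioms rQ'])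
  have rinv: "\<exists>G\<in>carrier Q. F \<otimes>\<^bsub>Q\<^esub> G = \<one>\<^bsub>Q\<^esub>" if F: "F \<in> carrier Q" and Fnz: "F \<noteq> \<zero>\<^bsub>Q\<^esub>" for F
  proof -
    have "\<psi> F \<noteq> \<zero>\<^bsub>Q'\<^esub>" using \<psi>i \<psi>0 F Fnz QR.zero_closed by (metis inj_onD)
    moreover have "\<psi> F \<in> carrier Q'" using ring_hom_closed[OF \<psi>h F] .
    ultimately have "\<psi> F \<in> Units Q'" using drQ' unfolding division_ring_def by blast
    then obtain y where y: "y \<in> carrier Q'" "\<psi> F \<otimes>\<^bsub>Q'\<^esub> y = \<one>\<^bsub>Q'\<^esub>" unfolding Units_def by blast
    obtain G where G: "G \<in> carrier Q" "y = \<psi> G" using y(1) \<psi>s by blast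
    have "\<psi> (F \<otimes>\<^bsub>Q\<^esub> G) = \<psi> \<one>\<^bsub>Q\<^esub>"
      using ring_hom_mult[OF \<psi>h F G(1)] ring_hom_one[OF \<psi>h] y G by simp
    then have "F \<otimes>\<^bsub>Q\<^esub> G = \<one>\<^bsub>Q\<^esub>" by (rule inj_onD[OF \<psi>i _ QR.m_closed[OF F G(1)] QR.one_closed])
    then show ?thesis using G(1) by blast
  qed
  show ?thesis unfolding monoform_def
  proof (intro conjI M.ore_nonzero_module[OF ore] allI impI)
    fix N f assume Ns: "submodule N R M" and fl: "f \<in> lin_map R M N M (carrier M)" and ex: "\<exists>x\<in>N. f x \<noteq> \<zero>\<^bsub>M\<^esub>"
    have NM: "N \<subseteq> carrier M" using M.submoduleE(1)[OF Ns] .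
    have ilN: "\<iota> \<in> lin_map R M N E (carrier E)" by (rule lin_map_mono[OF iota_l NM]) (use lin_mapD(1)[OF iota_l] NM in blast)
    define A where "A = \<iota> ` N"
    have As: "submodule A R E" unfolding A_def by (rule image_submodule[OF lmM lmE Ns ilN subset_refl])
    have AH: "A \<subseteq> H" unfolding A_def using iota_H NM by blast
    have idl: "(\<lambda>y. y) \<in> lin_map R E A E (carrier E)" by (rule lin_mapI) (use AH HE in auto)
    have idr: "\<And>y. y \<in> A \<Longrightarrow> y \<in> \<iota> ` carrier M" unfolding A_def using NM by blast
    have invl: "(\<lambda>y. inv_into (carrier M) \<iota> y) \<in> lin_map R E A M (carrier M)"
      by (rule inv_lin(1)[OF lmE lmM lmE As iota_l iota_i idl idr])
    have invN: "(\<lambda>y. inv_into (carrier M) \<iota> y) \<in> lin_map R E A M N"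
    proof (rule lin_map_mono[OF invl subset_refl])
      fix y assume "y \<in> A"
      then obtain n where n: "n \<in> N" "y = \<iota> n" unfolding A_def by blast
      then show "inv_into (carrier M) \<iota> y \<in> N" using inv_into_f_f[OF iota_i] NM by auto
    qed
    define k where "k y = \<iota> (f (inv_into (carrier M) \<iota> y))" for y
    have kl: "k \<in> lin_map R E A E (carrier E)" unfolding k_def
      by (rule lin_map_comp[OF lin_map_comp[OF invN fl] iota_l])
    obtain F where F: "F \<in> carrier Q" "\<forall>y\<in>A. F y = k y" using ext_H[OF As AH kl] by blast
    have Fi: "F (\<iota> n) = \<iota> (f n)" if "n \<in> N" for n
    proof -
      have "\<iota> n \<in> A" unfolding A_def using that by blast
      then show ?thesis using F(2) k_def inv_into_f_f[OF iota_i] that NM by auto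
    qed
    obtain x where x: "x \<in> N" "f x \<noteq> \<zero>\<^bsub>M\<^esub>" using ex by blast
    have xM: "x \<in> carrier M" using x NM by blast
    have "F (\<iota> x) \<noteq> \<zero>\<^bsub>Q\<^esub> (\<iota> x)"
      using Fi[OF x(1)] iota_nz[OF lin_mapD(1)[OF fl x(1)] x(2)] Q_apply_zero[OF iota_H[OF xM]] by simp
    then have Fnz: "F \<noteq> \<zero>\<^bsub>Q\<^esub>" by metis
    obtain G where G: "G \<in> carrier Q" "F \<otimes>\<^bsub>Q\<^esub> G = \<one>\<^bsub>Q\<^esub>" using rinv[OF F(1) Fnz] by blast
    have GF: "G (F y) = y" if "y \<in> H" for y
      using Q_apply_mult[OF that, of F G] Q_apply_one[OF that] G(2) by simp
    show "inj_on f N"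
    proof (rule inj_onI)
      fix n1 n2 assume n: "n1 \<in> N" "n2 \<in> N" "f n1 = f n2"
      have "\<iota> n1 = G (F (\<iota> n1))" using GF iota_H n NM by auto
      also have "\<dots> = G (F (\<iota> n2))" using Fi n by simp
      also have "\<dots> = \<iota> n2" using GF iota_H n NM by auto
      finally show "n1 = n2" using inj_onD[OF iota_i] n NM by blast
    qed
  qed
qed

lemma part_c_d:
  "fully_retractable R M \<and> left_ore_domain (End_ring R M) \<longleftrightarrow>
   retractable R M \<and> left_ore_domain (End_ring R M) \<and>
   (\<exists>(Q' :: ('e \<Rightarrow> 'e) ring) \<phi>. division_ring_of_fractions (End_ring R M) Q' \<phi> \<and> Q \<simeq> Q')"
proof
  assume a: "fully_retractable R M \<and> left_ore_domain (End_ring R M)"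
  then have cm: "compressible R M" "monoform R M" using M.fr_ore_imp_cm by auto
  have "division_ring_of_fractions (End_ring R M) Q phi" by (rule cm_imp_d[OF cm])
  then have "\<exists>(Q' :: ('e \<Rightarrow> 'e) ring) \<phi>. division_ring_of_fractions (End_ring R M) Q' \<phi> \<and> Q \<simeq> Q'"
    using ring_iso_refl by blast
  then show "retractable R M \<and> left_ore_domain (End_ring R M) \<and>
   (\<exists>(Q' :: ('e \<Rightarrow> 'e) ring) \<phi>. division_ring_of_fractions (End_ring R M) Q' \<phi> \<and> Q \<simeq> Q')"
    using a M.fr_imp_retractable by blast
next
  assume a: "retractable R M \<and> left_ore_domain (End_ring R M) \<and>
   (\<exists>(Q' :: ('e \<Rightarrow> 'e) ring) \<phi>. division_ring_of_fractions (End_ring R M) Q' \<phi> \<and> Q \<simeq> Q')"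
  then have mono: "monoform R M" using d_imp_mono by blast
  have comp: "compressible R M" using M.retr_mono_imp_comp a mono by blast
  show "fully_retractable R M \<and> left_ore_domain (End_ring R M)" by (rule M.cm_imp_fr_ore[OF comp mono])
qed

end

theorem proposition3p1:
  fixes R :: "('r, 'c) ring_scheme"
    and M :: "('r, 'a) module"
    and E :: "('r, 'e) module"
    and \<iota> :: "'a \<Rightarrow> 'e"
  assumes "left_module R M"
    and "injective_hull R M E \<iota>"
  shows "(critically_compressible R M \<longleftrightarrow> compressible R M \<and> monoform R M)
       \<and> (compressible R M \<and> monoform R M \<longleftrightarrow>
            fully_retractable R M \<and> left_ore_domain (End_ring R M))
       \<and> (fully_retractable R M \<and> left_ore_domain (End_ring R M) \<longleftrightarrow>
            retractable R M \<and> left_ore_domain (End_ring R M) \<and>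
            (\<exists>(Q :: ('e \<Rightarrow> 'e) ring) \<phi>.
               division_ring_of_fractions (End_ring R M) Q \<phi> \<and>
               End_ring R (E\<lparr>carrier := self_injective_hull R M E\<rparr>) \<simeq> Q))"
proof -
  interpret hull_ctx R M E \<iota> by (rule hull_ctx.intro[OF assms])
  show ?thesis using M.part_a_b M.part_b_c part_c_d by blast
qed


end
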